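(* Let $X_1, X_2, X_3$ be i.i.d. with Lebesgue density $f$ on $\mathbb{R}^k$, and $Y_1, Y_2, Y_3$ i.i.d. with Lebesgue density $g$ on $\mathbb{R}^k$, where $f,g \in L^2(\mathbb{R}^k)$ and $X_i$ and $Y_j$ are independent for all $i,j$. Let $d$ be a homogeneous and translation invariant distance function on $\mathbb{R}^k$, let $\gamma:[0,\infty)\to[0,\infty)$ be continuous and strictly increasing with $\gamma(0)=0$, and set $h := \gamma\circ d$. If $f$ and $g$ have uniformly bounded centered oscillation with respect to $h$, then $$ f = g \quad \Longleftrightarrow \quad h(X_1,X_2) \overset{\mathcal{D}}{=} h(Y_1,Y_2) \overset{\mathcal{D}}{=} h(X_3,Y_3). $$
   Context: A distance function $d:\mathbb{R}^k\times\mathbb{R}^k\to[0,\infty)$ is nonnegative, continuous, with $d(x,y)=0$ if and only if $x=y$; it is homogeneous and translation invariant if $d(ax+b, ay+b) = |a|\, d(x,y)$ for all $a\in\mathbb{R}$ and $x,y,b\in\mathbb{R}^k$. For a function $h:\mathbb{R}^k\times\mathbb{R}^k\to[0,\infty)$, the $h$-ball is $B_t^{(h)}(x) := \{y\in\mathbb{R}^k : h(x,y) < t\}$ and $\Phi(x,t) := \mu(B_t^{(h)}(x))$, where $\mu$ is Lebesgue measure on $\mathbb{R}^k$. The centered oscillation of $f$ at $x$ on scale $\epsilon$ with respect to $h$ is $A_f^{(h)}(x,\epsilon) := \sup_{0<t<\epsilon} \frac{1}{\Phi(x,t)}\int_{B_t^{(h)}(x)} |f(y)-f(x)|\,dy$;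 it is uniformly bounded (on the scale $\epsilon$) if there is $C>0$ with $A_f^{(h)}(x,\epsilon) < C$ for almost every $x$. Here $\overset{\mathcal{D}}{=}$ denotes equality in distribution. *)

theory Defs
  imports "HOL-Probability.Probability"
begin

definition distance_fun :: "('a::euclidean_space \<Rightarrow> 'a \<Rightarrow> real) \<Rightarrow> bool" where
  "distance_fun d \<longleftrightarrow>
     (\<forall>x y. d x y \<ge> 0) \<and>
     continuous_on UNIV (\<lambda>p. d (fst p) (snd p)) \<and>
     (\<forall>x y. d x y = 0 \<longleftrightarrow> x = y)"

definition homog_transl_inv :: "('a::euclidean_space \<Rightarrow> 'a \<Rightarrow> real) \<Rightarrow> bool" where
  "homog_transl_inv d \<longleftrightarrow>
     (\<forall>a x y b. d (a *\<^sub>R x + b) (a *\<^sub>R y + b) = \<bar>a\<bar> * d x y)"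

definition hball :: "('a \<Rightarrow> 'a \<Rightarrow> real) \<Rightarrow> 'a \<Rightarrow> real \<Rightarrow> 'a set" where
  "hball h x t = {y. h x y < t}"

definition Phi :: "('a::euclidean_space \<Rightarrow> 'a \<Rightarrow> real) \<Rightarrow> 'a \<Rightarrow> real \<Rightarrow> ennreal" where
  "Phi h x t = emeasure lborel (hball h x t)"

definition centered_osc ::
  "('a::euclidean_space \<Rightarrow> 'a \<Rightarrow> real) \<Rightarrow> ('a \<Rightarrow> real) \<Rightarrow> 'a \<Rightarrow> real \<Rightarrow> ennreal" where
  "centered_osc h f x \<epsilon> =
     (SUP t\<in>{0<..<\<epsilon>}.
        (\<integral>\<^sup>+ y. ennreal \<bar>f y - f x\<bar> * indicator (hball h x t) y \<partial>lborel) / Phi h x t)"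

definition unif_bdd_osc :: "('a::euclidean_space \<Rightarrow> 'a \<Rightarrow> real) \<Rightarrow> ('a \<Rightarrow> real) \<Rightarrow> bool" where
  "unif_bdd_osc h f \<longleftrightarrow>
     (\<exists>\<epsilon>>0. \<exists>C>0. AE x in lborel. centered_osc h f x \<epsilon> < ennreal C)"

end

theory Submission
  imports Defs
begin

lemma negl_null:
  assumes "negligible (N::'a::euclidean_space set)"
  obtains N' where "N' \<in> null_sets lborel" "N \<subseteq> N'"
proof -
  have "N \<in> null_sets (completion lborel)" using assms negligible_iff_null_sets by metis
  then have "\<exists>N'\<in>null_sets lborel. N \<subseteq> N'" by (simp only: null_sets_completion_iff2)
  then show ?thesis using that by blast
qed

lemma corner_diff:
  fixes w :: "'a::euclidean_space \<Rightarrow> real"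
  assumes w: "integrable lborel w"
  obtains N where "N \<in> null_sets lborel"
    "\<And>x. x \<notin> N \<Longrightarrow> ((\<lambda>h. (LINT y:cbox x (x + h *\<^sub>R One)|lborel. w y) / h ^ DIM('a)) \<longlongrightarrow> w x) (at_right 0)"
proof -
  have si: "set_integrable lborel (cbox a b) w" for a b
    unfolding set_integrable_def using w by (intro integrable_mult_indicator) auto
  have wi: "\<And>a b. w integrable_on cbox a b"
    using set_borel_integral_eq_integral(1)[OF si] .
  obtain N where N: "negligible N"
    "\<And>x e. \<lbrakk>x \<notin> N; 0 < e\<rbrakk> \<Longrightarrow>
               \<exists>d>0. \<forall>h. 0 < h \<and> h < d \<longrightarrow>
                 norm(integral (cbox x (x + h *\<^sub>R One)) w /\<^sub>R h ^ DIM('a) - w x) < e"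
    by (rule integrable_ccontinuous_explicit[OF wi]) blast
  obtain N' where N': "N' \<in> null_sets lborel" "N \<subseteq> N'" using negl_null[OF N(1)] by blast
  show ?thesis
  proof (rule that[OF N'(1)])
    fix x assume "x \<notin> N'"
    then have xN: "x \<notin> N" using N'(2) by blast
    show "((\<lambda>h. (LINT y:cbox x (x + h *\<^sub>R One)|lborel. w y) / h ^ DIM('a)) \<longlongrightarrow> w x) (at_right 0)"
      unfolding tendsto_iff eventually_at_right[OF zero_less_one_class.zero_less_one]
    proof (intro allI impI)
      fix e :: real assume "e > 0"
      then obtain d where d: "d > 0" "\<forall>h. 0 < h \<and> h < d \<longrightarrow>
                 norm(integral (cbox x (x + h *\<^sub>R One)) w /\<^sub>R h ^ DIM('a) - w x) < e"
        using N(2)[OF xN \<open>e > 0\<close>] by blast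
      show "\<exists>b>0. \<forall>y>0. y < b \<longrightarrow> dist ((LINT y:cbox x (x + y *\<^sub>R One)|lborel. w y) / y ^ DIM('a)) (w x) < e"
      proof (intro exI[of _ "min d 1"] conjI allI impI)
        fix h :: real assume "0 < h" "h < min d 1"
        then have "norm (integral (cbox x (x + h *\<^sub>R One)) w /\<^sub>R h ^ DIM('a) - w x) < e"
          using d(2) \<open>0 < h\<close> \<open>h < min d 1\<close> by (meson min_less_iff_conj)
        moreover have "(LINT y:cbox x (x + h *\<^sub>R One)|lborel. w y) = integral (cbox x (x + h *\<^sub>R One)) w"
          by (rule set_borel_integral_eq_integral(2)[OF si])
        ultimately show "dist ((LINT y:cbox x (x + h *\<^sub>R One)|lborel. w y) / h ^ DIM('a)) (w x) < e"
          by (simp add: dist_norm divide_inverse_commute)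
      qed (use d in simp)
    qed
  qed
qed

definition rflx :: "'a set \<Rightarrow> 'a::euclidean_space \<Rightarrow> 'a" where
  "rflx J x = (\<Sum>j\<in>Basis. ((if j \<in> J then -1 else 1) * (x \<bullet> j)) *\<^sub>R j)"

lemma sum_Basis_inner: "j \<in> Basis \<Longrightarrow> (\<Sum>i\<in>Basis. f i *\<^sub>R i) \<bullet> j = f j"
proof -
  assume j: "j \<in> Basis"
  have "(\<Sum>i\<in>Basis. f i *\<^sub>R i) \<bullet> j = (\<Sum>i\<in>Basis. if i = j then f i else 0)"
    unfolding inner_sum_left by (rule sum.cong) (auto simp: inner_Basis j)
  then show ?thesis by (simp add: j)
qed

lemma rflx_inner: "j \<in> Basis \<Longrightarrow> rflx J x \<bullet> j = (if j \<in> J then -1 else 1) * (x \<bullet> j)"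
  unfolding rflx_def by (rule sum_Basis_inner)

lemma rflx_rflx[simp]: "rflx J (rflx J x) = x"
  by (rule euclidean_eqI) (simp add: rflx_inner)

lemma rflx_add: "rflx J (x + y) = rflx J x + rflx J y"
  by (rule euclidean_eqI) (simp add: rflx_inner inner_add_left algebra_simps)

lemma rflx_norm: "norm (rflx J x) = norm x"
proof -
  have "(rflx J x) \<bullet> (rflx J x) = x \<bullet> x"
    by (subst (1 2) euclidean_inner) (rule sum.cong, auto simp: rflx_inner)
  then show ?thesis by (simp add: norm_eq_sqrt_inner)
qed

lemma rflx_measurable[measurable]: "rflx J \<in> borel_measurable borel"
  unfolding rflx_def[abs_def] by simp

lemma distr_rflx: "distr lborel borel (rflx J) = (lborel :: 'a::euclidean_space measure)"
proof -
  have p: "(\<Prod>j\<in>(Basis::'a set). \<bar>if j \<in> J then -1 else 1::real\<bar>) = 1"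
    by (rule prod.neutral) auto
  have e: "(\<lambda>x::'a. 0 + (\<Sum>j\<in>Basis. ((if j \<in> J then -1 else 1) * (x \<bullet> j)) *\<^sub>R j)) = rflx J"
    by (simp add: rflx_def[abs_def])
  show ?thesis
    using lborel_affine_euclidean[where c="\<lambda>j. if j \<in> J then -1 else (1::real)" and t="0::'a"]
    unfolding p e by (simp add: density_1)
qed


lemma corner_nn:
  fixes w :: "'a::euclidean_space \<Rightarrow> real"
  assumes w: "integrable lborel w" and w0: "\<And>x. w x \<ge> 0"
  shows "AE x in lborel. \<forall>e>0. eventually (\<lambda>h. (\<integral>\<^sup>+y. ennreal (w (x + rflx J y)) * indicator (cbox 0 (h *\<^sub>R One)) y \<partial>lborel) \<le> ennreal (h^DIM('a) * (w x + e))) (at_right 0)"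
proof -
  define w' where "w' = (\<lambda>y. w (rflx J y))"
  have wm[measurable]: "w \<in> borel_measurable borel" using borel_measurable_integrable[OF w] by simp
  have w'i: "integrable lborel w'"
    using integrable_distr_eq[of "rflx J" lborel borel w] w unfolding distr_rflx w'_def by simp
  obtain N where N: "N \<in> null_sets lborel"
     "\<And>x. x \<notin> N \<Longrightarrow> ((\<lambda>h. (LINT y:cbox x (x + h *\<^sub>R One)|lborel. w' y) / h ^ DIM('a)) \<longlongrightarrow> w' x) (at_right 0)"
    using corner_diff[OF w'i] by blast
  have N2: "rflx J -` N \<in> null_sets lborel"
  proof -
    have "N \<in> null_sets (distr lborel borel (rflx J))" using N(1) by (simp add: distr_rflx)
    then show ?thesis by (subst (asm) null_sets_distr_iff) auto
  qed
  have "AE x in lborel. x \<notin> rflx J -` N" by (rule AE_not_in[OF N2])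
  then show ?thesis
  proof (rule eventually_mono)
    fix x assume "x \<notin> rflx J -` N"
    then have xN: "rflx J x \<notin> N" by simp
    define z where "z = rflx J x"
    have lim: "((\<lambda>h. (LINT y:cbox z (z + h *\<^sub>R One)|lborel. w' y) / h ^ DIM('a)) \<longlongrightarrow> w x) (at_right 0)"
      using N(2)[OF xN] by (simp add: w'_def z_def)
    have eqI: "(\<integral>\<^sup>+y. ennreal (w (x + rflx J y)) * indicator (cbox 0 (h *\<^sub>R One)) y \<partial>lborel) = ennreal (LINT y:cbox z (z + h *\<^sub>R One)|lborel. w' y)" for h
    proof -
      have si: "integrable lborel (\<lambda>y. indicator (cbox z (z + h *\<^sub>R One)) y *\<^sub>R w' y)"
        by (intro integrable_mult_indicator w'i) auto
      have "ennreal (LINT y:cbox z (z + h *\<^sub>R One)|lborel. w' y) = (\<integral>\<^sup>+y. ennreal (indicator (cbox z (z + h *\<^sub>R One)) y *\<^sub>R w' y) \<partial>lborel)"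
        unfolding set_lebesgue_integral_def by (rule nn_integral_eq_integral[OF si, symmetric]) (auto simp: w'_def w0)
      also have "\<dots> = (\<integral>\<^sup>+y. ennreal (indicator (cbox z (z + h *\<^sub>R One)) y *\<^sub>R w' y) \<partial>(distr lborel borel ((+) z)))"
        by (simp add: lborel_distr_plus)
      also have "\<dots> = (\<integral>\<^sup>+y. ennreal (indicator (cbox z (z + h *\<^sub>R One)) (z + y) *\<^sub>R w' (z + y)) \<partial>lborel)"
        by (rule nn_integral_distr) (auto simp: w'_def)
      also have "\<dots> = (\<integral>\<^sup>+y. ennreal (w (x + rflx J y)) * indicator (cbox 0 (h *\<^sub>R One)) y \<partial>lborel)"
        by (rule nn_integral_cong) (auto simp: w'_def z_def rflx_add indicator_def mem_box inner_add_left)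
      finally show ?thesis ..
    qed
    show "\<forall>e>0. eventually (\<lambda>h. (\<integral>\<^sup>+y. ennreal (w (x + rflx J y)) * indicator (cbox 0 (h *\<^sub>R One)) y \<partial>lborel) \<le> ennreal (h^DIM('a) * (w x + e))) (at_right 0)"
    proof (intro allI impI)
      fix e::real assume "e>0"
      have "eventually (\<lambda>h. dist ((LINT y:cbox z (z + h *\<^sub>R One)|lborel. w' y) / h ^ DIM('a)) (w x) < e) (at_right 0)"
        using lim \<open>e>0\<close> by (rule tendstoD)
      moreover have "eventually (\<lambda>h. h > 0) (at_right (0::real))"
        by (simp add: eventually_at_right_less)
      ultimately show "eventually (\<lambda>h. (\<integral>\<^sup>+y. ennreal (w (x + rflx J y)) * indicator (cbox 0 (h *\<^sub>R One)) y \<partial>lborel) \<le> ennreal (h^DIM('a) * (w x + e))) (at_right 0)"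
      proof eventually_elim
        case (elim h)
        then have "(LINT y:cbox z (z + h *\<^sub>R One)|lborel. w' y) / h ^ DIM('a) < w x + e"
          by (auto simp: dist_real_def)
        then have "(LINT y:cbox z (z + h *\<^sub>R One)|lborel. w' y) < h^DIM('a) * (w x + e)"
          using elim by (simp add: pos_divide_less_eq mult.commute)
        then show ?case unfolding eqI by (intro ennreal_leI) simp
      qed
    qed
  qed
qed


lemma inner_One_Basis: "i \<in> Basis \<Longrightarrow> One \<bullet> i = (1::real)"
  using sum_Basis_inner[of i "\<lambda>_. 1"] by simp

lemma cube_int_le:
  fixes F :: "'a::euclidean_space \<Rightarrow> ennreal"
  assumes [measurable]: "F \<in> borel_measurable borel" and a: "a \<ge> 0"
  shows "(\<integral>\<^sup>+v. F v * indicator (cbox (-(a*\<^sub>R One)) (a*\<^sub>R One)) v \<partial>lborel)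
     \<le> (\<Sum>J\<in>Pow Basis. \<integral>\<^sup>+y. F (rflx J y) * indicator (cbox 0 (a*\<^sub>R One)) y \<partial>lborel)"
proof -
  let ?C = "cbox 0 (a*\<^sub>R One) :: 'a set"
  let ?K = "cbox (-(a*\<^sub>R One)) (a*\<^sub>R One) :: 'a set"
  have "(\<integral>\<^sup>+v. F v * indicator ?K v \<partial>lborel) \<le> (\<integral>\<^sup>+v. (\<Sum>J\<in>Pow Basis. F v * indicator ?C (rflx J v)) \<partial>lborel)"
  proof (rule nn_integral_mono)
    fix v :: 'a
    show "F v * indicator ?K v \<le> (\<Sum>J\<in>Pow Basis. F v * indicator ?C (rflx J v))"
    proof (cases "v \<in> ?K")
      case True
      define J where "J = {j\<in>Basis. v\<bullet>j < 0}"
      have "rflx J v \<in> ?C" using True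
        by (auto simp: mem_box rflx_inner J_def inner_One_Basis)
      then have "F v * indicator ?K v = F v * indicator ?C (rflx J v)" using True by simp
      also have "\<dots> \<le> (\<Sum>J\<in>Pow Basis. F v * indicator ?C (rflx J v))"
        by (rule member_le_sum) (auto simp: J_def)
      finally show ?thesis .
    qed simp
  qed
  also have "\<dots> = (\<Sum>J\<in>Pow Basis. \<integral>\<^sup>+v. F v * indicator ?C (rflx J v) \<partial>lborel)"
    by (rule nn_integral_sum) auto
  also have "\<dots> = (\<Sum>J\<in>Pow Basis. \<integral>\<^sup>+y. F (rflx J y) * indicator ?C y \<partial>lborel)"
  proof (rule sum.cong[OF refl])
    fix J :: "'a set"
    have "(\<integral>\<^sup>+v. F v * indicator ?C (rflx J v) \<partial>lborel) = (\<integral>\<^sup>+v. F v * indicator ?C (rflx J v) \<partial>distr lborel borel (rflx J))"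
      by (simp add: distr_rflx)
    also have "\<dots> = (\<integral>\<^sup>+y. F (rflx J y) * indicator ?C (rflx J (rflx J y)) \<partial>lborel)"
      by (rule nn_integral_distr) auto
    finally show "(\<integral>\<^sup>+v. F v * indicator ?C (rflx J v) \<partial>lborel) = (\<integral>\<^sup>+y. F (rflx J y) * indicator ?C y \<partial>lborel)"
      by simp
  qed
  finally show ?thesis .
qed

lemma emeasure_cbox0: "a \<ge> 0 \<Longrightarrow> emeasure lborel (cbox 0 (a*\<^sub>R One) :: 'a::euclidean_space set) = ennreal (a ^ DIM('a))"
  by (simp add: emeasure_lborel_cbox_eq inner_One_Basis)

lemma emeasure_cube:
  assumes a: "a \<ge> 0"
  shows "emeasure lborel (cbox (-(a*\<^sub>R One)) (a*\<^sub>R One) :: 'a::euclidean_space set) = ennreal ((2*a) ^ DIM('a))"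
proof -
  have p: "(\<Prod>b\<in>(Basis::'a set). (a *\<^sub>R One + a *\<^sub>R One) \<bullet> b) = (\<Prod>b\<in>(Basis::'a set). 2*a)"
    by (rule prod.cong) (auto simp: inner_add_left inner_One_Basis)
  show ?thesis using a by (simp add: emeasure_lborel_cbox_eq inner_One_Basis p power_mult_distrib)
qed


lemma leb_point:
  fixes u :: "'a::euclidean_space \<Rightarrow> real"
  assumes u: "integrable lborel u"
  shows "AE x in lborel. \<forall>e>0. eventually (\<lambda>a. (\<integral>\<^sup>+v. ennreal \<bar>u (x+v) - u x\<bar> * indicator (cbox (-(a*\<^sub>R One)) (a*\<^sub>R One)) v \<partial>lborel) \<le> ennreal (e * a^DIM('a))) (at_right 0)"
proof -
  have um[measurable]: "u \<in> borel_measurable borel" using borel_measurable_integrable[OF u] by simp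
  define w where "w q m y = \<bar>u y - q\<bar> * indicator (ball 0 (real m)) y" for q :: real and m :: nat and y :: 'a
  have ballm[measurable]: "ball (0::'a) r \<in> sets borel" for r by simp
  have wm[measurable]: "w q m \<in> borel_measurable borel" for q m unfolding w_def by measurable
  have wi: "integrable lborel (w q m)" for q m
  proof -
    have "integrable lborel (\<lambda>y. \<bar>u y\<bar> + \<bar>q\<bar> * indicator (ball 0 (real m)) y)"
    proof (intro Bochner_Integration.integrable_add integrable_abs u integrable_mult_right)
      show "integrable lborel (indicator (ball 0 (real m)) :: 'a \<Rightarrow> real)"
        by (intro integrable_real_indicator emeasure_bounded_finite) auto
    qed
    then show ?thesis
      by (rule Bochner_Integration.integrable_bound) (auto simp: w_def indicator_def)
  qed
  have w0: "w q m y \<ge> 0" for q m y by (simp add: w_def)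
  define P where "P q m J x \<longleftrightarrow> (\<forall>e>0. eventually (\<lambda>h. (\<integral>\<^sup>+y. ennreal (w q m (x + rflx J y)) * indicator (cbox 0 (h *\<^sub>R One)) y \<partial>lborel) \<le> ennreal (h^DIM('a) * (w q m x + e))) (at_right 0))"
    for q m J x
  have "\<forall>q\<in>\<rat>. \<forall>m\<in>(UNIV::nat set). \<forall>J\<in>Pow (Basis::'a set). AE x in lborel. P q m J x"
    unfolding P_def using corner_nn[OF wi w0] by blast
  then have "\<forall>q\<in>\<rat>. \<forall>m\<in>(UNIV::nat set). AE x in lborel. \<forall>J\<in>Pow (Basis::'a set). P q m J x"
    by (subst AE_ball_countable) (auto intro: countable_finite)
  then have "\<forall>q\<in>\<rat>. AE x in lborel. \<forall>m\<in>(UNIV::nat set). \<forall>J\<in>Pow (Basis::'a set). P q m J x"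
    by (subst AE_ball_countable) auto
  then have "AE x in lborel. \<forall>q\<in>\<rat>. \<forall>m\<in>(UNIV::nat set). \<forall>J\<in>Pow (Basis::'a set). P q m J x"
    by (subst AE_ball_countable) (auto simp: countable_rat)
  then show ?thesis
  proof (rule eventually_mono)
    fix x assume H: "\<forall>q\<in>\<rat>. \<forall>m\<in>(UNIV::nat set). \<forall>J\<in>Pow (Basis::'a set). P q m J x"
    show "\<forall>e>0. eventually (\<lambda>a. (\<integral>\<^sup>+v. ennreal \<bar>u (x+v) - u x\<bar> * indicator (cbox (-(a*\<^sub>R One)) (a*\<^sub>R One)) v \<partial>lborel) \<le> ennreal (e * a^DIM('a))) (at_right 0)"
    proof (intro allI impI)
      fix e :: real assume e: "e > 0"
      define e' where "e' = e / (3 * 2^DIM('a))"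
      have e': "e' > 0" using e by (simp add: e'_def)
      obtain q where q: "q \<in> \<rat>" "u x - e' < q" "q < u x"
        using Rats_dense_in_real[of "u x - e'" "u x"] e' by auto
      then have qx: "\<bar>u x - q\<bar> < e'" by simp
      obtain m :: nat where m: "norm x + 1 < real m" using reals_Archimedean2 by blast
      have wx: "w q m x = \<bar>u x - q\<bar>" using m by (simp add: w_def)
      have ev1: "eventually (\<lambda>h. \<forall>J\<in>Pow (Basis::'a set). (\<integral>\<^sup>+y. ennreal (w q m (x + rflx J y)) * indicator (cbox 0 (h *\<^sub>R One)) y \<partial>lborel) \<le> ennreal (h^DIM('a) * (w q m x + e'))) (at_right 0)"
        using H q(1) e' by (intro eventually_ball_finite) (auto simp: P_def)
      have ev2: "eventually (\<lambda>h. 0 < h \<and> h < 1 / DIM('a)) (at_right (0::real))"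
        unfolding eventually_at_right[OF zero_less_one_class.zero_less_one]
        by (rule exI[of _ "1 / DIM('a)"]) auto
      from ev1 ev2 show "eventually (\<lambda>a. (\<integral>\<^sup>+v. ennreal \<bar>u (x+v) - u x\<bar> * indicator (cbox (-(a*\<^sub>R One)) (a*\<^sub>R One)) v \<partial>lborel) \<le> ennreal (e * a^DIM('a))) (at_right 0)"
      proof eventually_elim
        case (elim a)
        let ?C = "cbox 0 (a*\<^sub>R One) :: 'a set"
        let ?K = "cbox (-(a*\<^sub>R One)) (a*\<^sub>R One) :: 'a set"
        have a0: "a \<ge> 0" using elim by simp
        have inball: "x + rflx J y \<in> ball 0 (real m)" if "y \<in> ?C" for J y
        proof -
          have "norm y \<le> (\<Sum>i\<in>Basis. \<bar>y \<bullet> i\<bar>)" by (rule norm_le_l1)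
          also have "\<dots> \<le> (\<Sum>i\<in>(Basis::'a set). a)"
            using that by (intro sum_mono) (auto simp: mem_box inner_One_Basis)
          also have "\<dots> = DIM('a) * a" by simp
          also have "\<dots> < 1" using elim by (simp add: field_simps)
          finally have "norm y < 1" .
          then have "norm (x + rflx J y) < norm x + 1"
            using norm_triangle_ineq[of x "rflx J y"] by (simp add: rflx_norm)
          then show ?thesis using m by simp
        qed
        have "(\<integral>\<^sup>+v. ennreal \<bar>u (x+v) - u x\<bar> * indicator ?K v \<partial>lborel) \<le> (\<integral>\<^sup>+v. ennreal (\<bar>u (x+v) - q\<bar> + e') * indicator ?K v \<partial>lborel)"
        proof (intro nn_integral_mono mult_right_mono)
          fix v show "ennreal \<bar>u (x+v) - u x\<bar> \<le> ennreal (\<bar>u (x+v) - q\<bar> + e')"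
            using qx by (intro ennreal_leI) linarith
        qed simp
        also have "\<dots> \<le> (\<Sum>J\<in>Pow Basis. \<integral>\<^sup>+y. ennreal (\<bar>u (x + rflx J y) - q\<bar> + e') * indicator ?C y \<partial>lborel)"
          by (rule cube_int_le[OF _ a0]) measurable
        also have "\<dots> \<le> (\<Sum>J\<in>Pow (Basis::'a set). ennreal (a^DIM('a) * (3*e')))"
        proof (rule sum_mono)
          fix J :: "'a set" assume J: "J \<in> Pow Basis"
          have "(\<integral>\<^sup>+y. ennreal (\<bar>u (x + rflx J y) - q\<bar> + e') * indicator ?C y \<partial>lborel)
              = (\<integral>\<^sup>+y. ennreal (w q m (x + rflx J y)) * indicator ?C y + ennreal e' * indicator ?C y \<partial>lborel)"
            by (rule nn_integral_cong) (use e' inball[of _ J] in \<open>auto simp: w_def indicator_def ennreal_plus\<close>)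
          also have "\<dots> = (\<integral>\<^sup>+y. ennreal (w q m (x + rflx J y)) * indicator ?C y \<partial>lborel) + (\<integral>\<^sup>+y. ennreal e' * indicator ?C y \<partial>lborel)"
            by (rule nn_integral_add) auto
          also have "(\<integral>\<^sup>+y. ennreal e' * indicator ?C y \<partial>lborel) = ennreal e' * ennreal (a^DIM('a))"
            using a0 by (simp add: nn_integral_cmult_indicator emeasure_cbox0)
          also have "(\<integral>\<^sup>+y. ennreal (w q m (x + rflx J y)) * indicator ?C y \<partial>lborel) \<le> ennreal (a^DIM('a) * (w q m x + e'))"
            using elim J by auto
          also have "ennreal (a^DIM('a) * (w q m x + e')) + ennreal e' * ennreal (a^DIM('a)) = ennreal (a^DIM('a) * (w q m x + e') + e' * a^DIM('a))"
            using a0 e' by (simp add: ennreal_plus ennreal_mult wx)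
          also have "\<dots> \<le> ennreal (a^DIM('a) * (3*e'))"
          proof (intro ennreal_leI)
            have "a ^ DIM('a) * \<bar>u x - q\<bar> \<le> a ^ DIM('a) * e'"
              using a0 qx by (intro mult_left_mono) auto
            then show "a^DIM('a) * (w q m x + e') + e' * a^DIM('a) \<le> a^DIM('a) * (3*e')"
              using wx by (simp add: algebra_simps)
          qed
          finally show "(\<integral>\<^sup>+y. ennreal (\<bar>u (x + rflx J y) - q\<bar> + e') * indicator ?C y \<partial>lborel) \<le> ennreal (a^DIM('a) * (3*e'))"
            by simp
        qed
        also have "\<dots> = ennreal (e * a^DIM('a))"
        proof -
          have "(\<Sum>J\<in>Pow (Basis::'a set). ennreal (a^DIM('a) * (3*e'))) = ennreal (\<Sum>J\<in>Pow (Basis::'a set). a^DIM('a) * (3*e'))"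
            using a0 e' by (intro sum_ennreal) auto
          also have "(\<Sum>J\<in>Pow (Basis::'a set). a^DIM('a) * (3*e')) = e * a^DIM('a)"
            by (simp add: card_Pow e'_def field_simps)
          finally show ?thesis .
        qed
        finally show ?case .
      qed
    qed
  qed
qed


lemma transl_integrable:
  fixes h :: "'a::euclidean_space \<Rightarrow> real"
  assumes "integrable lborel h"
  shows "integrable lborel (\<lambda>v. h (x + v))"
  using integrable_distr_eq[of "(+) x" lborel borel h] assms
  by (simp add: lborel_distr_plus borel_measurable_integrable)

lemma avg_dev:
  fixes h :: "'a::euclidean_space \<Rightarrow> real"
  assumes h: "integrable lborel h" and S: "S \<in> sets borel" "emeasure lborel S < \<infinity>"
  shows "\<bar>(\<integral>v. h (x + v) * indicator S v \<partial>lborel) - h x * measure lborel S\<bar>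
           \<le> enn2real (\<integral>\<^sup>+v. ennreal \<bar>h (x + v) - h x\<bar> * indicator S v \<partial>lborel)"
proof -
  have Sl: "S \<in> sets lborel" using S by simp
  have i1: "integrable lborel (\<lambda>v. h (x + v) * indicator S v)"
    by (rule integrable_real_mult_indicator[OF Sl transl_integrable[OF h]])
  have i2: "integrable lborel (\<lambda>v. h x * indicator S v)"
    using S by (intro integrable_mult_right integrable_real_indicator) auto
  have i3: "integrable lborel (\<lambda>v. \<bar>h (x + v) - h x\<bar> * indicator S v)"
  proof -
    have i3': "integrable lborel (\<lambda>v. \<bar>h (x+v) * indicator S v - h x * indicator S v\<bar>)"
      using i1 i2 by (intro integrable_abs Bochner_Integration.integrable_diff)
    have "(\<lambda>v. \<bar>h (x+v) - h x\<bar> * indicator S v) = (\<lambda>v. \<bar>h (x+v) * indicator S v - h x * indicator S v\<bar>)"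
      by (auto simp: indicator_def fun_eq_iff)
    then show ?thesis using i3' by simp
  qed
  have i4: "integrable lborel (\<lambda>v. (h (x + v) - h x) * indicator S v)"
  proof -
    have "(\<lambda>v. (h (x+v) - h x) * indicator S v) = (\<lambda>v. h (x+v) * indicator S v - h x * indicator S v)"
      by (auto simp: fun_eq_iff algebra_simps)
    then show ?thesis using i1 i2 by simp
  qed
  have "(\<integral>v. h (x + v) * indicator S v \<partial>lborel) - h x * measure lborel S
      = (\<integral>v. h (x + v) * indicator S v - h x * indicator S v \<partial>lborel)"
    using i1 i2 S by (simp add: Bochner_Integration.integral_diff)
  also have "\<dots> = (\<integral>v. (h (x + v) - h x) * indicator S v \<partial>lborel)"
    by (simp add: algebra_simps)
  finally have eq: "(\<integral>v. h (x + v) * indicator S v \<partial>lborel) - h x * measure lborel S = (\<integral>v. (h (x + v) - h x) * indicator S v \<partial>lborel)" .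
  have "\<bar>\<integral>v. (h (x + v) - h x) * indicator S v \<partial>lborel\<bar> \<le> (\<integral>v. \<bar>h (x + v) - h x\<bar> * indicator S v \<partial>lborel)"
    by (rule integral_abs_bound_integral[OF i4 i3]) (auto simp: indicator_def)
  also have "\<dots> = enn2real (\<integral>\<^sup>+v. ennreal \<bar>h (x + v) - h x\<bar> * indicator S v \<partial>lborel)"
  proof -
    have "(\<integral>\<^sup>+v. ennreal (\<bar>h (x + v) - h x\<bar> * indicator S v) \<partial>lborel) = ennreal (\<integral>v. \<bar>h (x + v) - h x\<bar> * indicator S v \<partial>lborel)"
      by (rule nn_integral_eq_integral[OF i3]) auto
    moreover have "(\<integral>\<^sup>+v. ennreal (\<bar>h (x + v) - h x\<bar> * indicator S v) \<partial>lborel) = (\<integral>\<^sup>+v. ennreal \<bar>h (x + v) - h x\<bar> * indicator S v \<partial>lborel)"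
      by (rule nn_integral_cong) (simp add: indicator_def)
    ultimately show ?thesis by (simp add: integral_nonneg_AE)
  qed
  finally show ?thesis using eq by simp
qed

lemma N_facts:
  fixes N :: "'a::euclidean_space \<Rightarrow> real"
  assumes Nc: "continuous_on UNIV N" and Nh: "\<And>c v. N (c *\<^sub>R v) = \<bar>c\<bar> * N v"
    and N0: "\<And>v. N v = 0 \<longleftrightarrow> v = 0" and Nnn: "\<And>v. N v \<ge> 0"
  obtains m \<delta> where "m > 0" "\<delta> > 0" "\<And>v. m * norm v \<le> N v" "\<And>v. norm v < \<delta> \<Longrightarrow> N v < 1"
proof -
  obtain b :: 'a where b: "b \<in> Basis" using nonempty_Basis by blast
  then have "b \<in> sphere 0 1" by simp
  then have "sphere (0::'a) 1 \<noteq> {}" by blast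
  then obtain s0 where s0: "s0 \<in> sphere (0::'a) 1" "\<And>y. y \<in> sphere 0 1 \<Longrightarrow> N s0 \<le> N y"
    using continuous_attains_inf[OF compact_sphere _ continuous_on_subset[OF Nc]] by blast
  have m: "N s0 > 0" using s0(1) N0[of s0] Nnn[of s0] by auto
  have lo: "N s0 * norm v \<le> N v" for v
  proof (cases "v = 0")
    case True then show ?thesis using Nnn[of 0] by simp
  next
    case False
    define s where "s = (1 / norm v) *\<^sub>R v"
    have "s \<in> sphere 0 1" using False by (simp add: s_def)
    then have "N s0 \<le> N s" by (rule s0(2))
    moreover have "v = norm v *\<^sub>R s" using False by (simp add: s_def)
    then have "N v = norm v * N s" using Nh[of "norm v" s] by simp
    ultimately show ?thesis using mult_right_mono[of "N s0" "N s" "norm v"] by (simp add: mult.commute)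
  qed
  obtain d where d: "d > 0" "\<And>v. dist v 0 < d \<Longrightarrow> dist (N v) (N 0) < 1"
    using Nc unfolding continuous_on_iff by (meson UNIV_I zero_less_one)
  have up: "norm v < d \<Longrightarrow> N v < 1" for v
    using d(2)[of v] N0[of 0] Nnn[of v] by (simp add: dist_norm)
  show ?thesis by (rule that[OF m d(1) lo up])
qed


lemma main_analytic:
  fixes f g N :: "'a::euclidean_space \<Rightarrow> real"
  assumes f: "integrable lborel f" and g: "integrable lborel g"
    and f2: "integrable lborel (\<lambda>x. (f x)\<^sup>2)" and g2: "integrable lborel (\<lambda>x. (g x)\<^sup>2)"
    and Nc: "continuous_on UNIV N" and Nh: "\<And>c v. N (c *\<^sub>R v) = \<bar>c\<bar> * N v"
    and N0: "\<And>v. N v = 0 \<longleftrightarrow> v = 0" and Nnn: "\<And>v. N v \<ge> 0"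
    and r0: "r0 > 0" and C: "C \<ge> 0"
    and oscf: "AE x in lborel. \<forall>r\<in>{0<..<r0}. (\<integral>\<^sup>+v. ennreal \<bar>f (x+v) - f x\<bar> * indicator {v. N v < r} v \<partial>lborel) \<le> ennreal C * emeasure lborel {v. N v < r}"
    and oscg: "AE x in lborel. \<forall>r\<in>{0<..<r0}. (\<integral>\<^sup>+v. ennreal \<bar>g (x+v) - g x\<bar> * indicator {v. N v < r} v \<partial>lborel) \<le> ennreal C * emeasure lborel {v. N v < r}"
    and Q: "\<And>r. r > 0 \<Longrightarrow> (\<integral>x. (f x - g x) * (\<integral>v. (f (x+v) - g (x+v)) * indicator {v. N v < r} v \<partial>lborel) \<partial>lborel) = 0"
  shows "AE x in lborel. f x = g x"
proof -
  define u where "u x = f x - g x" for x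
  have ui: "integrable lborel u" unfolding u_def using f g by auto
  have fm[measurable]: "f \<in> borel_measurable borel" using borel_measurable_integrable[OF f] by simp
  have gm[measurable]: "g \<in> borel_measurable borel" using borel_measurable_integrable[OF g] by simp
  have um[measurable]: "u \<in> borel_measurable borel" unfolding u_def by measurable
  obtain m \<delta> where m: "m > 0" and \<delta>: "\<delta> > 0" and mlo: "\<And>v. m * norm v \<le> N v"
    and \<delta>up: "\<And>v. norm v < \<delta> \<Longrightarrow> N v < 1"
    by (rule N_facts[OF Nc Nh N0 Nnn]) blast
  define B where "B r = {v. N v < r}" for r
  have Bopen: "open (B r)" for r unfolding B_def by (rule open_Collect_less[OF Nc continuous_on_const])
  have Bm[measurable]: "B r \<in> sets borel" for r using Bopen by simp
  define c where "c = (\<delta> / DIM('a))^DIM('a)"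
  have c: "c > 0" using \<delta> by (simp add: c_def)
  have Bsub: "B r \<subseteq> cbox (-((r/m) *\<^sub>R One)) ((r/m) *\<^sub>R One)" for r
  proof
    fix v assume "v \<in> B r"
    then have "N v < r" by (simp add: B_def)
    then have nv: "norm v \<le> r / m" using mlo[of v] m by (simp add: field_simps)
    show "v \<in> cbox (-((r/m) *\<^sub>R One)) ((r/m) *\<^sub>R One)"
      unfolding mem_box
    proof (intro ballI)
      fix i :: 'a assume i: "i \<in> Basis"
      have "\<bar>v \<bullet> i\<bar> \<le> r / m" using Basis_le_norm[OF i, of v] nv by linarith
      then show "(-((r/m) *\<^sub>R One)) \<bullet> i \<le> v \<bullet> i \<and> v \<bullet> i \<le> ((r/m) *\<^sub>R One) \<bullet> i"
        using i by (auto simp: inner_One_Basis abs_le_iff)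
    qed
  qed
  have Bsup: "cbox (-((r*\<delta>/(2*DIM('a))) *\<^sub>R One)) ((r*\<delta>/(2*DIM('a))) *\<^sub>R One) \<subseteq> B r" if r: "r > 0" for r
  proof
    fix v :: 'a assume v: "v \<in> cbox (-((r*\<delta>/(2*DIM('a))) *\<^sub>R One)) ((r*\<delta>/(2*DIM('a))) *\<^sub>R One)"
    have "norm v \<le> (\<Sum>i\<in>Basis. \<bar>v \<bullet> i\<bar>)" by (rule norm_le_l1)
    also have "\<dots> \<le> (\<Sum>i\<in>(Basis::'a set). r*\<delta>/(2*DIM('a)))"
      using v by (intro sum_mono) (auto simp: mem_box inner_One_Basis abs_le_iff)
    also have "\<dots> = r * \<delta> / 2" by simp
    also have "\<dots> < r * \<delta>" using r \<delta> by simp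
    finally have nv: "norm v < r * \<delta>" .
    have "norm ((1/r) *\<^sub>R v) < \<delta>" using nv r by (simp add: field_simps)
    then have "N ((1/r) *\<^sub>R v) < 1" by (rule \<delta>up)
    moreover have "N v = r * N ((1/r) *\<^sub>R v)" using Nh[of "1/r" v] r by simp
    ultimately show "v \<in> B r" using r by (simp add: B_def)
  qed
  have Blo: "ennreal (c * r^DIM('a)) \<le> emeasure lborel (B r)" if r: "r > 0" for r
  proof -
    have "emeasure lborel (cbox (-((r*\<delta>/(2*DIM('a))) *\<^sub>R One)) ((r*\<delta>/(2*DIM('a))) *\<^sub>R One) :: 'a set) = ennreal ((2*(r*\<delta>/(2*DIM('a))))^DIM('a))"
      using r \<delta> by (intro emeasure_cube) simp
    also have "(2*(r*\<delta>/(2*DIM('a))))^DIM('a) = c * r^DIM('a)"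
    proof -
      have "2*(r*\<delta>/(2*DIM('a))) = (\<delta>/DIM('a)) * r" by (simp add: field_simps)
      then show ?thesis by (simp only: c_def power_mult_distrib)
    qed
    finally have eq: "emeasure lborel (cbox (-((r*\<delta>/(2*DIM('a))) *\<^sub>R One)) ((r*\<delta>/(2*DIM('a))) *\<^sub>R One) :: 'a set) = ennreal (c * r^DIM('a))" .
    have "emeasure lborel (cbox (-((r*\<delta>/(2*DIM('a))) *\<^sub>R One)) ((r*\<delta>/(2*DIM('a))) *\<^sub>R One) :: 'a set) \<le> emeasure lborel (B r)"
      by (rule emeasure_mono[OF Bsup[OF r]]) simp
    then show ?thesis unfolding eq .
  qed
  have Bfin: "emeasure lborel (B r) < \<infinity>" for r
    by (rule emeasure_bounded_finite[OF bounded_subset[OF bounded_cbox Bsub]])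
  define mB where "mB r = measure lborel (B r)" for r
  have emB: "emeasure lborel (B r) = ennreal (mB r)" for r
    using Bfin[of r] unfolding mB_def by (intro emeasure_eq_ennreal_measure) auto
  have mBlo: "c * r^DIM('a) \<le> mB r" if "r>0" for r
    using Blo[OF that] unfolding emB by (subst (asm) ennreal_le_iff) (auto simp: mB_def)
  have mBpos: "mB r > 0" if "r>0" for r
    using mBlo[OF that] c that by (smt (verit) zero_less_power mult_pos_pos)
  define rs where "rs k = r0 / 2 * inverse (real (Suc k))" for k :: nat
  have rs_pos: "0 < rs k" for k using r0 by (simp add: rs_def)
  have rs_lt: "rs k < r0" for k
  proof -
    have "inverse (real (Suc k)) \<le> 1" by (simp add: field_simps)
    then have "rs k \<le> r0 / 2" using r0 unfolding rs_def by (simp add: mult_left_le)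
    then show ?thesis using r0 by simp
  qed
  have rs0: "rs \<longlonglongrightarrow> 0"
    unfolding rs_def using tendsto_mult[OF tendsto_const[of "r0/2"] LIMSEQ_inverse_real_of_nat] by simp
  have rsm_lim: "filterlim (\<lambda>k. rs k / m) (at_right 0) sequentially"
  proof -
    have "\<forall>k. rs k / m \<in> {0<..} \<and> rs k / m \<noteq> 0" using rs_pos m by (metis divide_pos_pos greaterThan_iff less_irrefl)
    then show ?thesis
      unfolding filterlim_at using m tendsto_divide[OF rs0 tendsto_const[of m]] by (auto intro: always_eventually)
  qed
  define T where "T k x = (\<integral>v. u (x+v) * indicator (B (rs k)) v \<partial>lborel)" for k x
  define A where "A k x = T k x / mB (rs k)" for k x
  have Tm[measurable]: "T k \<in> borel_measurable lborel" for k
    unfolding T_def by (rule lborel.borel_measurable_lebesgue_integral) measurable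
  have Am[measurable]: "A k \<in> borel_measurable lborel" for k
    unfolding A_def by measurable
  have Tdiff: "T k x = (\<integral>v. f (x+v) * indicator (B (rs k)) v \<partial>lborel) - (\<integral>v. g (x+v) * indicator (B (rs k)) v \<partial>lborel)" for k x
  proof -
    have "(\<lambda>v. u (x+v) * indicator (B (rs k)) v) = (\<lambda>v. f (x+v) * indicator (B (rs k)) v - g (x+v) * indicator (B (rs k)) v)"
      by (auto simp: u_def fun_eq_iff algebra_simps)
    moreover have "integrable lborel (\<lambda>v. f (x+v) * indicator (B (rs k)) v)"
      by (rule integrable_real_mult_indicator[OF _ transl_integrable[OF f]]) simp
    moreover have "integrable lborel (\<lambda>v. g (x+v) * indicator (B (rs k)) v)"
      by (rule integrable_real_mult_indicator[OF _ transl_integrable[OF g]]) simp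
    ultimately show ?thesis unfolding T_def by simp
  qed
  have devh: "\<bar>(\<integral>v. h (x+v) * indicator (B r) v \<partial>lborel) / mB r - h x\<bar> \<le> enn2real (\<integral>\<^sup>+v. ennreal \<bar>h (x+v) - h x\<bar> * indicator (B r) v \<partial>lborel) / mB r"
    if h: "integrable lborel h" and r: "r > 0" for h x r
  proof -
    have mp: "mB r > 0" by (rule mBpos[OF r])
    have "(\<integral>v. h (x+v) * indicator (B r) v \<partial>lborel) / mB r - h x = ((\<integral>v. h (x+v) * indicator (B r) v \<partial>lborel) - h x * mB r) / mB r"
      using mp by (simp add: field_simps)
    then have "\<bar>(\<integral>v. h (x+v) * indicator (B r) v \<partial>lborel) / mB r - h x\<bar> = \<bar>(\<integral>v. h (x+v) * indicator (B r) v \<partial>lborel) - h x * mB r\<bar> / mB r"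
      using mp by simp
    also have "\<dots> \<le> enn2real (\<integral>\<^sup>+v. ennreal \<bar>h (x+v) - h x\<bar> * indicator (B r) v \<partial>lborel) / mB r"
      using avg_dev[OF h Bm Bfin, of x] mp unfolding mB_def by (intro divide_right_mono) auto
    finally show ?thesis .
  qed
  have conv: "AE x in lborel. (\<lambda>k. A k x) \<longlonglongrightarrow> u x"
    using leb_point[OF ui]
  proof eventually_elim
    case (elim x)
    show ?case
    proof (rule tendstoI)
      fix e :: real assume e: "e > 0"
      define e' where "e' = e / 2 * c * m^DIM('a)"
      have e': "e' > 0" using e c m by (simp add: e'_def)
      have "eventually (\<lambda>a. (\<integral>\<^sup>+v. ennreal \<bar>u (x+v) - u x\<bar> * indicator (cbox (-(a*\<^sub>R One)) (a*\<^sub>R One)) v \<partial>lborel) \<le> ennreal (e' * a^DIM('a))) (at_right 0)"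
        using elim e' by blast
      then have ev: "eventually (\<lambda>k. (\<integral>\<^sup>+v. ennreal \<bar>u (x+v) - u x\<bar> * indicator (cbox (-((rs k / m)*\<^sub>R One)) ((rs k / m)*\<^sub>R One)) v \<partial>lborel) \<le> ennreal (e' * (rs k / m)^DIM('a))) sequentially"
        by (rule eventually_compose_filterlim[OF _ rsm_lim])
      then show "eventually (\<lambda>k. dist (A k x) (u x) < e) sequentially"
      proof eventually_elim
        case (elim k)
        define r where "r = rs k"
        have r: "r > 0" using rs_pos by (simp add: r_def)
        have "(\<integral>\<^sup>+v. ennreal \<bar>u (x+v) - u x\<bar> * indicator (B r) v \<partial>lborel) \<le> (\<integral>\<^sup>+v. ennreal \<bar>u (x+v) - u x\<bar> * indicator (cbox (-((r / m)*\<^sub>R One)) ((r / m)*\<^sub>R One)) v \<partial>lborel)"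
          using Bsub[of r] by (intro nn_integral_mono mult_left_mono) (auto simp: indicator_def)
        also have "\<dots> \<le> ennreal (e' * (r / m)^DIM('a))" using elim by (simp add: r_def)
        finally have E: "enn2real (\<integral>\<^sup>+v. ennreal \<bar>u (x+v) - u x\<bar> * indicator (B r) v \<partial>lborel) \<le> e' * (r / m)^DIM('a)"
          using e' r m by (intro enn2real_leI) auto
        have "\<bar>A k x - u x\<bar> \<le> enn2real (\<integral>\<^sup>+v. ennreal \<bar>u (x+v) - u x\<bar> * indicator (B r) v \<partial>lborel) / mB r"
          using devh[OF ui r, of x] by (simp add: A_def T_def r_def)
        also have "\<dots> \<le> (e' * (r / m)^DIM('a)) / (c * r^DIM('a))"
          using E mBlo[OF r] c r e' m by (intro frac_le) auto
        also have "\<dots> = e / 2" using r m c by (simp add: e'_def power_divide field_simps)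
        also have "\<dots> < e" using e by simp
        finally show "dist (A k x) (u x) < e" by (simp add: dist_real_def)
      qed
    qed
  qed
  have bound: "AE x in lborel. \<forall>k. \<bar>A k x\<bar> \<le> \<bar>u x\<bar> + 2 * C"
    using oscf oscg
  proof eventually_elim
    case (elim x)
    show ?case
    proof
      fix k
      define r where "r = rs k"
      have r: "r > 0" "r \<in> {0<..<r0}" using rs_pos rs_lt by (auto simp: r_def)
      have mp: "mB r > 0" by (rule mBpos[OF r(1)])
      have Ef: "enn2real (\<integral>\<^sup>+v. ennreal \<bar>f (x+v) - f x\<bar> * indicator (B r) v \<partial>lborel) \<le> C * mB r"
        using elim(1) r(2) C unfolding B_def[symmetric] emB
        by (intro enn2real_leI) (auto simp: ennreal_mult mB_def)
      have Eg: "enn2real (\<integral>\<^sup>+v. ennreal \<bar>g (x+v) - g x\<bar> * indicator (B r) v \<partial>lborel) \<le> C * mB r"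
        using elim(2) r(2) C unfolding B_def[symmetric] emB
        by (intro enn2real_leI) (auto simp: ennreal_mult mB_def)
      have Af: "\<bar>(\<integral>v. f (x+v) * indicator (B r) v \<partial>lborel) / mB r - f x\<bar> \<le> C"
      proof -
        have "\<bar>(\<integral>v. f (x+v) * indicator (B r) v \<partial>lborel) / mB r - f x\<bar> \<le> enn2real (\<integral>\<^sup>+v. ennreal \<bar>f (x+v) - f x\<bar> * indicator (B r) v \<partial>lborel) / mB r"
          by (rule devh[OF f r(1)])
        also have "\<dots> \<le> C * mB r / mB r" using Ef mp by (intro divide_right_mono) auto
        finally show ?thesis using mp by simp
      qed
      have Ag: "\<bar>(\<integral>v. g (x+v) * indicator (B r) v \<partial>lborel) / mB r - g x\<bar> \<le> C"
      proof -
        have "\<bar>(\<integral>v. g (x+v) * indicator (B r) v \<partial>lborel) / mB r - g x\<bar> \<le> enn2real (\<integral>\<^sup>+v. ennreal \<bar>g (x+v) - g x\<bar> * indicator (B r) v \<partial>lborel) / mB r"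
          by (rule devh[OF g r(1)])
        also have "\<dots> \<le> C * mB r / mB r" using Eg mp by (intro divide_right_mono) auto
        finally show ?thesis using mp by simp
      qed
      have "A k x = (\<integral>v. f (x+v) * indicator (B r) v \<partial>lborel) / mB r - (\<integral>v. g (x+v) * indicator (B r) v \<partial>lborel) / mB r"
        by (simp add: A_def Tdiff r_def diff_divide_distrib)
      then show "\<bar>A k x\<bar> \<le> \<bar>u x\<bar> + 2 * C" using Af Ag by (simp add: u_def)
    qed
  qed
  have sq: "(a - b)^2 \<le> 2 * a^2 + 2 * b^2" for a b :: real
  proof -
    have "(a-b)^2 + (a+b)^2 = 2 * a^2 + 2 * b^2" by (simp add: power2_eq_square algebra_simps)
    moreover have "(a+b)^2 \<ge> 0" by simp
    ultimately show ?thesis by linarith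
  qed
  have u2: "integrable lborel (\<lambda>x. u x * u x)"
  proof (rule Bochner_Integration.integrable_bound[of _ "\<lambda>x. 2 * (f x)^2 + 2 * (g x)^2"])
    show "integrable lborel (\<lambda>x. 2 * (f x)^2 + 2 * (g x)^2)" using f2 g2 by auto
    show "(\<lambda>x. u x * u x) \<in> borel_measurable lborel" by measurable
    show "AE x in lborel. norm (u x * u x) \<le> norm (2 * (f x)^2 + 2 * (g x)^2)"
    proof (rule AE_I2)
      fix x
      have h0: "u x * u x \<le> 2 * (f x)^2 + 2 * (g x)^2"
        using sq[of "f x" "g x"] unfolding u_def power2_eq_square .
      have h1: "\<bar>u x * u x\<bar> = u x * u x" by simp
      have h2: "u x * u x \<le> \<bar>2 * (f x)^2 + 2 * (g x)^2\<bar>" using h0 by linarith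
      show "norm (u x * u x) \<le> norm (2 * (f x)^2 + 2 * (g x)^2)"
        unfolding real_norm_def h1 by (rule h2)
    qed
  qed
  define W where "W x = u x * u x + 2 * C * \<bar>u x\<bar>" for x
  have Wi: "integrable lborel W" unfolding W_def using u2 ui by auto
  have lim: "(\<lambda>k. \<integral>x. u x * A k x \<partial>lborel) \<longlonglongrightarrow> (\<integral>x. u x * u x \<partial>lborel)"
  proof (rule integral_dominated_convergence[where w=W])
    show "(\<lambda>x. u x * u x) \<in> borel_measurable lborel" by measurable
    show "(\<lambda>x. u x * A k x) \<in> borel_measurable lborel" for k by measurable
    show "integrable lborel W" by (rule Wi)
    show "AE x in lborel. (\<lambda>k. u x * A k x) \<longlonglongrightarrow> u x * u x"
      using conv by eventually_elim (rule tendsto_mult[OF tendsto_const])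
    show "AE x in lborel. norm (u x * A k x) \<le> W x" for k
      using bound
    proof eventually_elim
      case (elim x)
      have "\<bar>u x\<bar> * \<bar>A k x\<bar> \<le> \<bar>u x\<bar> * (\<bar>u x\<bar> + 2 * C)"
        using elim by (intro mult_left_mono) auto
      then show ?case by (simp add: W_def abs_mult algebra_simps)
    qed
  qed
  have zero: "(\<integral>x. u x * A k x \<partial>lborel) = 0" for k
  proof -
    have "(\<integral>x. u x * T k x \<partial>lborel) = 0"
      using Q[OF rs_pos[of k]] by (simp add: u_def T_def B_def)
    then show ?thesis by (simp add: A_def)
  qed
  have "(\<integral>x. u x * u x \<partial>lborel) = 0"
    using lim unfolding zero by (simp add: LIMSEQ_const_iff)
  then have "AE x in lborel. u x * u x = 0"
    using integral_nonneg_eq_0_iff_AE[OF u2] by simp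
  then show ?thesis by eventually_elim (simp add: u_def)
qed


lemma (in prob_space) indep_var_from_vars:
  assumes "indep_vars (\<lambda>_. N) X I" "i \<in> I" "j \<in> I" "i \<noteq> j"
  shows "indep_var N (X i) N (X j)"
proof -
  let ?F = "\<lambda>k. sigma_sets (space M) {X k -` A \<inter> space M | A. A \<in> sets N}"
  have rv: "\<forall>k\<in>I. random_variable N (X k)" and ind: "indep_sets ?F I"
    using assms(1) unfolding indep_vars_def by auto
  show ?thesis unfolding indep_var_eq indep_sets2_eq
  proof (intro conjI ballI)
    show "random_variable N (X i)" "random_variable N (X j)" using rv assms by auto
    show "?F i \<subseteq> events" "?F j \<subseteq> events" using ind assms unfolding indep_sets_def by auto
    fix a b assume a: "a \<in> ?F i" and b: "b \<in> ?F j"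
    have "prob (\<Inter>k\<in>{i,j}. (if k = i then a else b)) = (\<Prod>k\<in>{i,j}. prob (if k = i then a else b))"
      by (rule indep_setsD[OF ind]) (use assms a b in auto)
    then show "prob (a \<inter> b) = prob a * prob b" using assms(4) by (simp add: Int_commute)
  qed
qed

lemma law_pair:
  fixes a b :: "'b::euclidean_space \<Rightarrow> real"
  assumes P: "prob_space M" and X: "distributed M lborel X (\<lambda>x. ennreal (a x))"
    and Y: "distributed M lborel Y (\<lambda>x. ennreal (b x))"
    and I: "prob_space.indep_var M borel X borel Y"
    and H: "H \<in> borel_measurable (borel \<Otimes>\<^sub>M borel)"
  shows "distr M borel (\<lambda>\<omega>. H (X \<omega>, Y \<omega>)) = distr (density lborel (\<lambda>x. ennreal (a x)) \<Otimes>\<^sub>M density lborel (\<lambda>x. ennreal (b x))) borel H"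
proof -
  interpret prob_space M by (rule P)
  have Xm: "X \<in> measurable M borel" using distributed_measurable[OF X] by simp
  have Ym: "Y \<in> measurable M borel" using distributed_measurable[OF Y] by simp
  have prod: "distr M borel X \<Otimes>\<^sub>M distr M borel Y = distr M (borel \<Otimes>\<^sub>M borel) (\<lambda>\<omega>. (X \<omega>, Y \<omega>))"
    using I indep_var_distribution_eq by auto
  have dX: "distr M borel X = density lborel (\<lambda>x. ennreal (a x))"
    using distributed_distr_eq_density[OF X] by (metis distr_cong sets_lborel)
  have dY: "distr M borel Y = density lborel (\<lambda>x. ennreal (b x))"
    using distributed_distr_eq_density[OF Y] by (metis distr_cong sets_lborel)
  have "distr M borel (\<lambda>\<omega>. H (X \<omega>, Y \<omega>)) = distr (distr M (borel \<Otimes>\<^sub>M borel) (\<lambda>\<omega>. (X \<omega>, Y \<omega>))) borel H"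
    using Xm Ym H by (subst distr_distr) (auto simp: comp_def)
  also have "\<dots> = distr (density lborel (\<lambda>x. ennreal (a x)) \<Otimes>\<^sub>M density lborel (\<lambda>x. ennreal (b x))) borel H"
    unfolding prod[symmetric] dX dY ..
  finally show ?thesis .
qed

lemma law_emeasure:
  fixes a b :: "'b::euclidean_space \<Rightarrow> real" and H :: "'b \<times> 'b \<Rightarrow> real" and t :: real
  assumes Db: "prob_space (density lborel (\<lambda>x. ennreal (b x)))"
    and am: "a \<in> borel_measurable borel" and bm: "b \<in> borel_measurable borel"
    and H: "H \<in> borel_measurable (borel \<Otimes>\<^sub>M borel)"
  shows "emeasure (distr (density lborel (\<lambda>x. ennreal (a x)) \<Otimes>\<^sub>M density lborel (\<lambda>x. ennreal (b x))) borel H) {..<t}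
    = (\<integral>\<^sup>+x. ennreal (a x) * (\<integral>\<^sup>+y. ennreal (b y) * indicator {y. H (x,y) < t} y \<partial>lborel) \<partial>lborel)"
proof -
  let ?Da = "density lborel (\<lambda>x. ennreal (a x))"
  let ?Db = "density lborel (\<lambda>x. ennreal (b x))"
  interpret Db: prob_space ?Db by (rule Db)
  have sets_eq: "sets (?Da \<Otimes>\<^sub>M ?Db) = sets (borel \<Otimes>\<^sub>M borel)"
    by (intro sets_pair_measure_cong) auto
  have Hm: "H \<in> measurable (?Da \<Otimes>\<^sub>M ?Db) borel"
    by (subst measurable_cong_sets[OF sets_eq refl]) (rule H)
  define S where "S = H -` {..<t} \<inter> space (?Da \<Otimes>\<^sub>M ?Db)"
  have S: "S \<in> sets (?Da \<Otimes>\<^sub>M ?Db)" unfolding S_def by (rule measurable_sets[OF Hm]) (rule borel_open, simp)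
  have Sx: "Pair x -` S = {y. H (x,y) < t}" for x
    by (auto simp: S_def space_pair_measure)
  have "emeasure (distr (?Da \<Otimes>\<^sub>M ?Db) borel H) {..<t} = emeasure (?Da \<Otimes>\<^sub>M ?Db) S"
    unfolding S_def by (rule emeasure_distr[OF Hm]) (rule borel_open, simp)
  also have "\<dots> = (\<integral>\<^sup>+x. emeasure ?Db (Pair x -` S) \<partial>?Da)"
    by (rule Db.emeasure_pair_measure_alt[OF S])
  also have "\<dots> = (\<integral>\<^sup>+x. ennreal (a x) * emeasure ?Db (Pair x -` S) \<partial>lborel)"
  proof (rule nn_integral_density)
    show "(\<lambda>x. ennreal (a x)) \<in> borel_measurable lborel" using am by simp
    have "(\<lambda>x. emeasure ?Db (Pair x -` S)) \<in> borel_measurable ?Da"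
      by (rule Db.measurable_emeasure_Pair[OF S])
    then show "(\<lambda>x. emeasure ?Db (Pair x -` S)) \<in> borel_measurable lborel"
      by (subst (asm) measurable_cong_sets[OF sets_density refl])
  qed
  also have "\<dots> = (\<integral>\<^sup>+x. ennreal (a x) * (\<integral>\<^sup>+y. ennreal (b y) * indicator {y. H (x,y) < t} y \<partial>lborel) \<partial>lborel)"
  proof (rule nn_integral_cong)
    fix x
    have Hx: "(\<lambda>y. H (x, y)) \<in> borel_measurable borel" by (rule measurable_compose[OF measurable_Pair1' H]) simp
    have "(\<lambda>y. H (x, y)) -` {..<t} \<inter> space borel \<in> sets borel" by (rule measurable_sets[OF Hx]) simp
    then have "{y. H (x,y) < t} \<in> sets lborel" by (simp add: vimage_def)
    then show "ennreal (a x) * emeasure ?Db (Pair x -` S) = ennreal (a x) * (\<integral>\<^sup>+y. ennreal (b y) * indicator {y. H (x,y) < t} y \<partial>lborel)"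
      unfolding Sx using bm by (subst emeasure_density) auto
  qed
  finally show ?thesis .
qed

lemma B_meas:
  fixes N :: "'a::euclidean_space \<Rightarrow> real"
  assumes Nc: "continuous_on UNIV N" and Nh: "\<And>c v. N (c *\<^sub>R v) = \<bar>c\<bar> * N v"
    and N0: "\<And>v. N v = 0 \<longleftrightarrow> v = 0" and Nnn: "\<And>v. N v \<ge> 0" and r: "r > 0"
  shows "0 < emeasure lborel {v. N v < r}" "emeasure lborel {v. N v < r} < \<infinity>"
proof -
  obtain m \<delta> where m: "m > 0" and \<delta>: "\<delta> > 0" and mlo: "\<And>v. m * norm v \<le> N v"
    and \<delta>up: "\<And>v. norm v < \<delta> \<Longrightarrow> N v < 1"
    by (rule N_facts[OF Nc Nh N0 Nnn]) blast
  have Bopen: "open {v. N v < r}" by (rule open_Collect_less[OF Nc continuous_on_const])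
  have sub: "{v. N v < r} \<subseteq> cbox (-((r/m) *\<^sub>R One)) ((r/m) *\<^sub>R One)"
  proof
    fix v assume "v \<in> {v. N v < r}"
    then have "N v < r" by simp
    then have nv: "norm v \<le> r / m" using mlo[of v] m by (simp add: field_simps)
    show "v \<in> cbox (-((r/m) *\<^sub>R One)) ((r/m) *\<^sub>R One)"
      unfolding mem_box
    proof (intro ballI)
      fix i :: 'a assume i: "i \<in> Basis"
      have "\<bar>v \<bullet> i\<bar> \<le> r / m" using Basis_le_norm[OF i, of v] nv by linarith
      then show "(-((r/m) *\<^sub>R One)) \<bullet> i \<le> v \<bullet> i \<and> v \<bullet> i \<le> ((r/m) *\<^sub>R One) \<bullet> i"
        using i by (auto simp: inner_One_Basis abs_le_iff)
    qed
  qed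
  show "emeasure lborel {v. N v < r} < \<infinity>"
    by (rule emeasure_bounded_finite[OF bounded_subset[OF bounded_cbox sub]])
  define a where "a = r*\<delta>/(2*DIM('a))"
  have a: "a > 0" using r \<delta> by (simp add: a_def)
  have sup: "cbox (-(a *\<^sub>R One)) (a *\<^sub>R One) \<subseteq> {v. N v < r}"
  proof
    fix v :: 'a assume v: "v \<in> cbox (-(a *\<^sub>R One)) (a *\<^sub>R One)"
    have "norm v \<le> (\<Sum>i\<in>Basis. \<bar>v \<bullet> i\<bar>)" by (rule norm_le_l1)
    also have "\<dots> \<le> (\<Sum>i\<in>(Basis::'a set). a)"
      using v by (intro sum_mono) (auto simp: mem_box inner_One_Basis abs_le_iff)
    also have "\<dots> = r * \<delta> / 2" by (simp add: a_def)
    also have "\<dots> < r * \<delta>" using r \<delta> by simp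
    finally have nv: "norm v < r * \<delta>" .
    have "norm ((1/r) *\<^sub>R v) < \<delta>" using nv r by (simp add: field_simps)
    then have "N ((1/r) *\<^sub>R v) < 1" by (rule \<delta>up)
    moreover have "N v = r * N ((1/r) *\<^sub>R v)" using Nh[of "1/r" v] r by simp
    ultimately show "v \<in> {v. N v < r}" using r by simp
  qed
  have "emeasure lborel (cbox (-(a *\<^sub>R One)) (a *\<^sub>R One) :: 'a set) = ennreal ((2*a)^DIM('a))"
    using a by (intro emeasure_cube) simp
  then have "0 < emeasure lborel (cbox (-(a *\<^sub>R One)) (a *\<^sub>R One) :: 'a set)"
    using a by simp
  also have "\<dots> \<le> emeasure lborel {v. N v < r}"
    by (rule emeasure_mono[OF sup]) (use Bopen in simp)
  finally show "0 < emeasure lborel {v. N v < r}" .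
qed

lemma integral_transl:
  fixes G :: "'a::euclidean_space \<Rightarrow> real"
  assumes "G \<in> borel_measurable borel"
  shows "(\<integral>y. G y \<partial>lborel) = (\<integral>v. G (x + v) \<partial>lborel)"
proof -
  have "(\<integral>y. G y \<partial>lborel) = (\<integral>y. G y \<partial>distr lborel borel ((+) x))" by (simp add: lborel_distr_plus)
  also have "\<dots> = (\<integral>v. G (x + v) \<partial>lborel)" using assms by (intro integral_distr) auto
  finally show ?thesis .
qed

lemma nn_integral_transl:
  fixes G :: "'a::euclidean_space \<Rightarrow> ennreal"
  assumes "G \<in> borel_measurable borel"
  shows "(\<integral>\<^sup>+y. G y \<partial>lborel) = (\<integral>\<^sup>+v. G (x + v) \<partial>lborel)"
proof -
  have "(\<integral>\<^sup>+y. G y \<partial>lborel) = (\<integral>\<^sup>+y. G y \<partial>distr lborel borel ((+) x))" by (simp add: lborel_distr_plus)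
  also have "\<dots> = (\<integral>\<^sup>+v. G (x + v) \<partial>lborel)" using assms by (intro nn_integral_distr) auto
  finally show ?thesis .
qed

lemma emeasure_transl:
  fixes A :: "'a::euclidean_space set"
  assumes "A \<in> sets borel"
  shows "emeasure lborel A = emeasure lborel ((+) x -` A)"
proof -
  have "emeasure lborel A = emeasure (distr lborel borel ((+) x)) A" by (simp add: lborel_distr_plus)
  also have "\<dots> = emeasure lborel ((+) x -` A \<inter> space lborel)" using assms by (intro emeasure_distr) auto
  finally show ?thesis by simp
qed

lemma real_form:
  fixes a b :: "'a::euclidean_space \<Rightarrow> real" and K :: "'a \<Rightarrow> 'a \<Rightarrow> real"
  assumes a: "integrable lborel a" "\<And>x. a x \<ge> 0" and b: "integrable lborel b" "\<And>x. b x \<ge> 0"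
    and Km: "(\<lambda>p. K (fst p) (snd p)) \<in> borel_measurable (lborel \<Otimes>\<^sub>M lborel)"
    and K01: "\<And>x y. 0 \<le> K x y" "\<And>x y. K x y \<le> 1"
  shows "(\<integral>\<^sup>+x. ennreal (a x) * (\<integral>\<^sup>+y. ennreal (b y) * ennreal (K x y) \<partial>lborel) \<partial>lborel)
           = ennreal (\<integral>x. a x * (\<integral>y. b y * K x y \<partial>lborel) \<partial>lborel)"
    and "integrable lborel (\<lambda>x. a x * (\<integral>y. b y * K x y \<partial>lborel))"
proof -
  have am[measurable]: "a \<in> borel_measurable lborel" using borel_measurable_integrable[OF a(1)] .
  have bm[measurable]: "b \<in> borel_measurable lborel" using borel_measurable_integrable[OF b(1)] .
  have Kx: "(\<lambda>y. K x y) \<in> borel_measurable lborel" for x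
    using measurable_compose[OF measurable_Pair1'[of x lborel lborel] Km] by simp
  have ib: "integrable lborel (\<lambda>y. b y * K x y)" for x
  proof (rule Bochner_Integration.integrable_bound[OF b(1)])
    show "(\<lambda>y. b y * K x y) \<in> borel_measurable lborel" using Kx[of x] by measurable
    show "AE y in lborel. norm (b y * K x y) \<le> norm (b y)"
      using K01 b(2) by (auto simp: abs_mult intro!: mult_left_le)
  qed
  define F where "F x = (\<integral>y. b y * K x y \<partial>lborel)" for x
  have F0: "0 \<le> F x" for x unfolding F_def using K01 b(2) by (intro integral_nonneg_AE) auto
  have F1: "F x \<le> (\<integral>y. b y \<partial>lborel)" for x
    unfolding F_def using K01 b(2) by (intro integral_mono[OF ib b(1)]) (auto intro: mult_left_le)
  have Fm: "F \<in> borel_measurable lborel"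
  proof -
    have "(\<lambda>p. b (snd p) * K (fst p) (snd p)) \<in> borel_measurable (lborel \<Otimes>\<^sub>M lborel)"
      using Km by measurable
    then have "case_prod (\<lambda>x y. b y * K x y) \<in> borel_measurable (lborel \<Otimes>\<^sub>M lborel)"
      by (simp add: split_beta')
    then show ?thesis unfolding F_def by (rule lborel.borel_measurable_lebesgue_integral)
  qed
  have inner: "(\<integral>\<^sup>+y. ennreal (b y) * ennreal (K x y) \<partial>lborel) = ennreal (F x)" for x
  proof -
    have "(\<integral>\<^sup>+y. ennreal (b y) * ennreal (K x y) \<partial>lborel) = (\<integral>\<^sup>+y. ennreal (b y * K x y) \<partial>lborel)"
      using b(2) K01 by (intro nn_integral_cong) (simp add: ennreal_mult)
    also have "\<dots> = ennreal (F x)" unfolding F_def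
      using b(2) K01 by (intro nn_integral_eq_integral[OF ib]) auto
    finally show ?thesis .
  qed
  show iaF: "integrable lborel (\<lambda>x. a x * (\<integral>y. b y * K x y \<partial>lborel))"
    unfolding F_def[symmetric]
  proof (rule Bochner_Integration.integrable_bound[of _ "\<lambda>x. a x * (\<integral>y. b y \<partial>lborel)"])
    show "integrable lborel (\<lambda>x. a x * (\<integral>y. b y \<partial>lborel))" using a(1) by auto
    show "(\<lambda>x. a x * F x) \<in> borel_measurable lborel" using Fm by measurable
    show "AE x in lborel. norm (a x * F x) \<le> norm (a x * (\<integral>y. b y \<partial>lborel))"
      using a(2) F0 F1 by (auto simp: abs_mult intro!: mult_left_mono order_trans[OF F1 abs_ge_self])
  qed
  have "(\<integral>\<^sup>+x. ennreal (a x) * (\<integral>\<^sup>+y. ennreal (b y) * ennreal (K x y) \<partial>lborel) \<partial>lborel)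
      = (\<integral>\<^sup>+x. ennreal (a x * F x) \<partial>lborel)"
    using a(2) F0 by (intro nn_integral_cong) (simp add: inner ennreal_mult)
  also have "\<dots> = ennreal (\<integral>x. a x * F x \<partial>lborel)"
    using a(2) F0 by (intro nn_integral_eq_integral[OF iaF[unfolded F_def[symmetric]]]) auto
  finally show "(\<integral>\<^sup>+x. ennreal (a x) * (\<integral>\<^sup>+y. ennreal (b y) * ennreal (K x y) \<partial>lborel) \<partial>lborel)
           = ennreal (\<integral>x. a x * (\<integral>y. b y * K x y \<partial>lborel) \<partial>lborel)" by (simp add: F_def)
qed

theorem corollary1:
  fixes M :: "'w measure"
    and X Y :: "nat \<Rightarrow> 'w \<Rightarrow> real ^ 'k"
    and f g :: "real ^ 'k \<Rightarrow> real"
    and d :: "real ^ 'k \<Rightarrow> real ^ 'k \<Rightarrow> real"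
    and \<gamma> :: "real \<Rightarrow> real"
    and h :: "real ^ 'k \<Rightarrow> real ^ 'k \<Rightarrow> real"
  assumes P: "prob_space M"
    and f_nonneg: "\<And>x. f x \<ge> 0" and g_nonneg: "\<And>x. g x \<ge> 0"
    and f_meas: "f \<in> borel_measurable lborel" and g_meas: "g \<in> borel_measurable lborel"
    and f_L2: "integrable lborel (\<lambda>x. (f x)\<^sup>2)"
    and g_L2: "integrable lborel (\<lambda>x. (g x)\<^sup>2)"
    and X_dens: "\<And>i. i \<in> {1,2,3} \<Longrightarrow> distributed M lborel (X i) (\<lambda>x. ennreal (f x))"
    and Y_dens: "\<And>i. i \<in> {1,2,3} \<Longrightarrow> distributed M lborel (Y i) (\<lambda>x. ennreal (g x))"
    and X_indep: "prob_space.indep_vars M (\<lambda>_. borel) X {1,2,3}"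
    and Y_indep: "prob_space.indep_vars M (\<lambda>_. borel) Y {1,2,3}"
    and XY_indep: "\<And>i j. i \<in> {1,2,3} \<Longrightarrow> j \<in> {1,2,3} \<Longrightarrow>
                      prob_space.indep_var M borel (X i) borel (Y j)"
    and d_dist: "distance_fun d"
    and d_hti: "homog_transl_inv d"
    and \<gamma>_cont: "continuous_on {0..} \<gamma>"
    and \<gamma>_mono: "strict_mono_on {0..} \<gamma>"
    and \<gamma>_0: "\<gamma> 0 = 0"
    and \<gamma>_range: "\<gamma> ` {0..} \<subseteq> {0..}"
    and h_def: "h = (\<lambda>x y. \<gamma> (d x y))"
    and f_osc: "unif_bdd_osc h f"
    and g_osc: "unif_bdd_osc h g"
  shows "(AE x in lborel. f x = g x) \<longleftrightarrow>
           (distr M borel (\<lambda>\<omega>. h (X 1 \<omega>) (X 2 \<omega>)) = distr M borel (\<lambda>\<omega>. h (Y 1 \<omega>) (Y 2 \<omega>)) \<and>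
            distr M borel (\<lambda>\<omega>. h (Y 1 \<omega>) (Y 2 \<omega>)) = distr M borel (\<lambda>\<omega>. h (X 3 \<omega>) (Y 3 \<omega>)))"
proof -
  interpret prob_space M by (rule P)
  have dnn: "\<And>x y. d x y \<ge> 0" and dcont: "continuous_on UNIV (\<lambda>p. d (fst p) (snd p))"
    and d0: "\<And>x y. d x y = 0 \<longleftrightarrow> x = y"
    using d_dist unfolding distance_fun_def by auto
  have dh: "d (a *\<^sub>R x + b) (a *\<^sub>R y + b) = \<bar>a\<bar> * d x y" for a x y b
    using d_hti unfolding homog_transl_inv_def by blast
  define N where "N v = d 0 v" for v
  have dN: "d x y = N (y - x)" for x y
  proof -
    have "d (1 *\<^sub>R 0 + x) (1 *\<^sub>R (y - x) + x) = \<bar>1\<bar> * d 0 (y - x)"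
      using d_hti unfolding homog_transl_inv_def by blast
    then show ?thesis by (simp add: N_def)
  qed
  have Nh: "N (c *\<^sub>R v) = \<bar>c\<bar> * N v" for c v
  proof -
    have "d (c *\<^sub>R 0 + 0) (c *\<^sub>R v + 0) = \<bar>c\<bar> * d 0 v"
      using d_hti unfolding homog_transl_inv_def by blast
    then show ?thesis by (simp add: N_def)
  qed
  have Nc: "continuous_on UNIV N"
  proof -
    have "continuous_on UNIV (\<lambda>v. d (fst (0::real^'k, v)) (snd (0::real^'k, v)))"
      by (rule continuous_on_compose2[OF dcont]) (auto intro!: continuous_intros)
    then show ?thesis by (simp add: N_def[abs_def])
  qed
  have N0: "N v = 0 \<longleftrightarrow> v = 0" for v using d0[of 0 v] by (auto simp: N_def)
  have Nnn: "N v \<ge> 0" for v using dnn by (simp add: N_def)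
  have Nsym: "N (- v) = N v" for v using Nh[of "-1" v] by simp
  have Nm[measurable]: "N \<in> borel_measurable borel" using Nc by (rule borel_measurable_continuous_onI)
  have \<gamma>lt: "\<gamma> a < \<gamma> b \<longleftrightarrow> a < b" if "a \<ge> 0" "b \<ge> 0" for a b
  proof
    assume ab: "a < b" then show "\<gamma> a < \<gamma> b" using strict_mono_onD[OF \<gamma>_mono, of a b] that by auto
  next
    assume lt: "\<gamma> a < \<gamma> b"
    show "a < b"
    proof (rule ccontr)
      assume "\<not> a < b" then have "b < a \<or> b = a" by auto
      then have "\<gamma> b \<le> \<gamma> a" using strict_mono_onD[OF \<gamma>_mono, of b a] that by (auto intro: less_imp_le)
      with lt show False by simp
    qed
  qed
  have hN: "h x y = \<gamma> (N (y - x))" for x y by (simp add: h_def dN)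
  have hball_eq: "{y. h x y < \<gamma> r} = {y. N (y - x) < r}" if "r \<ge> 0" for x r
    using \<gamma>lt[OF Nnn that] by (auto simp: hN)
  define H where "H p = h (fst p) (snd p)" for p
  have Hcont: "continuous_on UNIV H"
  proof -
    have "continuous_on UNIV (\<lambda>p. \<gamma> (d (fst p) (snd p)))"
      by (rule continuous_on_compose2[OF \<gamma>_cont dcont]) (auto simp: dnn)
    then show ?thesis by (simp add: H_def[abs_def] h_def)
  qed
  have Hm: "H \<in> borel_measurable (borel \<Otimes>\<^sub>M borel)"
    unfolding borel_prod by (rule borel_measurable_continuous_onI[OF Hcont])
  have fm[measurable]: "f \<in> borel_measurable borel" using f_meas by simp
  have gm[measurable]: "g \<in> borel_measurable borel" using g_meas by simp
  have iX12: "indep_var borel (X 1) borel (X 2)" by (rule indep_var_from_vars[OF X_indep]) auto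
  have iY12: "indep_var borel (Y 1) borel (Y 2)" by (rule indep_var_from_vars[OF Y_indep]) auto
  have iXY3: "indep_var borel (X 3) borel (Y 3)" by (rule XY_indep) auto
  let ?Df = "density lborel (\<lambda>x. ennreal (f x))"
  let ?Dg = "density lborel (\<lambda>x. ennreal (g x))"
  have LXX: "distr M borel (\<lambda>\<omega>. h (X 1 \<omega>) (X 2 \<omega>)) = distr (?Df \<Otimes>\<^sub>M ?Df) borel H"
    using law_pair[OF P X_dens[of 1] X_dens[of 2] iX12 Hm] by (simp add: H_def)
  have LYY: "distr M borel (\<lambda>\<omega>. h (Y 1 \<omega>) (Y 2 \<omega>)) = distr (?Dg \<Otimes>\<^sub>M ?Dg) borel H"
    using law_pair[OF P Y_dens[of 1] Y_dens[of 2] iY12 Hm] by (simp add: H_def)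
  have LXY: "distr M borel (\<lambda>\<omega>. h (X 3 \<omega>) (Y 3 \<omega>)) = distr (?Df \<Otimes>\<^sub>M ?Dg) borel H"
    using law_pair[OF P X_dens[of 3] Y_dens[of 3] iXY3 Hm] by (simp add: H_def)
  have Dfp: "prob_space ?Df"
  proof -
    have "X 1 \<in> measurable M lborel" using distributed_measurable[OF X_dens[of 1]] by simp
    then have "prob_space (distr M lborel (X 1))" by (rule prob_space_distr)
    then show ?thesis using distributed_distr_eq_density[OF X_dens[of 1]] by simp
  qed
  have Dgp: "prob_space ?Dg"
  proof -
    have "Y 1 \<in> measurable M lborel" using distributed_measurable[OF Y_dens[of 1]] by simp
    then have "prob_space (distr M lborel (Y 1))" by (rule prob_space_distr)
    then show ?thesis using distributed_distr_eq_density[OF Y_dens[of 1]] by simp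
  qed
  have fi: "integrable lborel f"
  proof (rule integrableI_nonneg)
    show "f \<in> borel_measurable lborel" using f_meas .
    show "AE x in lborel. 0 \<le> f x" using f_nonneg by simp
    have "(\<integral>\<^sup>+x. ennreal (f x) \<partial>lborel) = emeasure ?Df UNIV" by (simp add: emeasure_density)
    also have "\<dots> = 1" using prob_space.emeasure_space_1[OF Dfp] by simp
    finally show "(\<integral>\<^sup>+x. ennreal (f x) \<partial>lborel) < \<infinity>" by simp
  qed
  have gi: "integrable lborel g"
  proof (rule integrableI_nonneg)
    show "g \<in> borel_measurable lborel" using g_meas .
    show "AE x in lborel. 0 \<le> g x" using g_nonneg by simp
    have "(\<integral>\<^sup>+x. ennreal (g x) \<partial>lborel) = emeasure ?Dg UNIV" by (simp add: emeasure_density)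
    also have "\<dots> = 1" using prob_space.emeasure_space_1[OF Dgp] by simp
    finally show "(\<integral>\<^sup>+x. ennreal (g x) \<partial>lborel) < \<infinity>" by simp
  qed
  show ?thesis
  proof
    assume AE: "AE x in lborel. f x = g x"
    have "?Df = ?Dg" by (rule density_cong) (use AE f_meas g_meas in auto)
    then show "distr M borel (\<lambda>\<omega>. h (X 1 \<omega>) (X 2 \<omega>)) = distr M borel (\<lambda>\<omega>. h (Y 1 \<omega>) (Y 2 \<omega>)) \<and>
            distr M borel (\<lambda>\<omega>. h (Y 1 \<omega>) (Y 2 \<omega>)) = distr M borel (\<lambda>\<omega>. h (X 3 \<omega>) (Y 3 \<omega>))"
      unfolding LXX LYY LXY by simp
  next
    assume eqs: "distr M borel (\<lambda>\<omega>. h (X 1 \<omega>) (X 2 \<omega>)) = distr M borel (\<lambda>\<omega>. h (Y 1 \<omega>) (Y 2 \<omega>)) \<and>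
            distr M borel (\<lambda>\<omega>. h (Y 1 \<omega>) (Y 2 \<omega>)) = distr M borel (\<lambda>\<omega>. h (X 3 \<omega>) (Y 3 \<omega>))"
    then have e1: "distr (?Df \<Otimes>\<^sub>M ?Df) borel H = distr (?Dg \<Otimes>\<^sub>M ?Dg) borel H"
      and e2: "distr (?Dg \<Otimes>\<^sub>M ?Dg) borel H = distr (?Df \<Otimes>\<^sub>M ?Dg) borel H"
      unfolding LXX LYY LXY by simp_all
    have Q: "(\<integral>x. (f x - g x) * (\<integral>v. (f (x+v) - g (x+v)) * indicator {v. N v < r} v \<partial>lborel) \<partial>lborel) = 0"
      if r: "r > 0" for r
    proof -
      define K where "K x y = (indicator {y. N (y - x) < r} y :: real)" for x y
      have Kalt: "(\<lambda>p. K (fst p) (snd p)) = (\<lambda>p. if N (snd p - fst p) < r then 1 else 0)"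
        by (auto simp: K_def fun_eq_iff indicator_def)
      have Km: "(\<lambda>p. K (fst p) (snd p)) \<in> borel_measurable (lborel \<Otimes>\<^sub>M lborel)"
        unfolding Kalt by measurable
      have K01: "\<And>x y. 0 \<le> K x y" "\<And>x y. K x y \<le> 1" by (auto simp: K_def indicator_def)
      have Ksym: "K x y = K y x" for x y
        using Nsym[of "y - x"] by (simp add: K_def indicator_def)
      have Kind: "indicator {y. H (x, y) < \<gamma> r} y = ennreal (K x y)" for x y
        using hball_eq[of r x] r by (auto simp: K_def H_def indicator_def)
      have Bx: "{y. N (y - x) < r} \<in> sets lborel" for x by measurable
      define R where "R a b = (\<integral>x. a x * (\<integral>y. b y * K x y \<partial>lborel) \<partial>lborel)" for a b :: "real^'k \<Rightarrow> real"
      have E: "emeasure (distr (density lborel (\<lambda>x. ennreal (a x)) \<Otimes>\<^sub>M density lborel (\<lambda>x. ennreal (b x))) borel H) {..<\<gamma> r} = ennreal (R a b)"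
        if "integrable lborel a" "\<And>x. a x \<ge> 0" "integrable lborel b" "\<And>x. b x \<ge> 0"
          "prob_space (density lborel (\<lambda>x. ennreal (b x)))" for a b
      proof -
        have am: "a \<in> borel_measurable borel" using borel_measurable_integrable[OF that(1)] by simp
        have bm: "b \<in> borel_measurable borel" using borel_measurable_integrable[OF that(3)] by simp
        have "emeasure (distr (density lborel (\<lambda>x. ennreal (a x)) \<Otimes>\<^sub>M density lborel (\<lambda>x. ennreal (b x))) borel H) {..<\<gamma> r}
            = (\<integral>\<^sup>+x. ennreal (a x) * (\<integral>\<^sup>+y. ennreal (b y) * indicator {y. H (x,y) < \<gamma> r} y \<partial>lborel) \<partial>lborel)"
          by (rule law_emeasure[OF that(5) am bm Hm])
        also have "\<dots> = (\<integral>\<^sup>+x. ennreal (a x) * (\<integral>\<^sup>+y. ennreal (b y) * ennreal (K x y) \<partial>lborel) \<partial>lborel)"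
          by (simp add: Kind)
        also have "\<dots> = ennreal (R a b)" unfolding R_def
          by (rule real_form(1)[OF that(1,2,3,4) Km K01])
        finally show ?thesis .
      qed
      have Rnn: "R a b \<ge> 0" if "\<And>x. a x \<ge> 0" "\<And>x. b x \<ge> 0" for a b
        unfolding R_def using that K01 by (auto intro!: integral_nonneg_AE mult_nonneg_nonneg)
      have Rff_gg: "R f f = R g g"
      proof -
        have "ennreal (R f f) = ennreal (R g g)"
          using arg_cong[OF e1, of "\<lambda>\<mu>. emeasure \<mu> {..<\<gamma> r}"]
            E[OF fi f_nonneg fi f_nonneg Dfp] E[OF gi g_nonneg gi g_nonneg Dgp] by simp
        then show ?thesis using Rnn f_nonneg g_nonneg by simp
      qed
      have Rgg_fg: "R g g = R f g"
      proof -
        have "ennreal (R g g) = ennreal (R f g)"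
          using arg_cong[OF e2, of "\<lambda>\<mu>. emeasure \<mu> {..<\<gamma> r}"]
            E[OF gi g_nonneg gi g_nonneg Dgp] E[OF fi f_nonneg gi g_nonneg Dgp] by simp
        then show ?thesis using Rnn f_nonneg g_nonneg by simp
      qed
      have Rgf_fg: "R g f = R f g"
      proof -
        have Km2: "(\<lambda>(x, y). ennreal (g x) * (ennreal (f y) * ennreal (K x y))) \<in> borel_measurable (lborel \<Otimes>\<^sub>M lborel)"
          using Km by (simp add: split_beta') measurable
        have "(\<integral>\<^sup>+x. ennreal (g x) * (\<integral>\<^sup>+y. ennreal (f y) * ennreal (K x y) \<partial>lborel) \<partial>lborel)
            = (\<integral>\<^sup>+x. (\<integral>\<^sup>+y. ennreal (g x) * (ennreal (f y) * ennreal (K x y)) \<partial>lborel) \<partial>lborel)"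
          using Km by (intro nn_integral_cong nn_integral_cmult[symmetric]) (simp add: K_def)
        also have "\<dots> = (\<integral>\<^sup>+y. (\<integral>\<^sup>+x. ennreal (g x) * (ennreal (f y) * ennreal (K x y)) \<partial>lborel) \<partial>lborel)"
          by (rule lborel_pair.Fubini'[OF Km2, symmetric])
        also have "\<dots> = (\<integral>\<^sup>+y. ennreal (f y) * (\<integral>\<^sup>+x. ennreal (g x) * ennreal (K y x) \<partial>lborel) \<partial>lborel)"
        proof (rule nn_integral_cong)
          fix y
          have "(\<integral>\<^sup>+x. ennreal (g x) * (ennreal (f y) * ennreal (K x y)) \<partial>lborel) = (\<integral>\<^sup>+x. ennreal (f y) * (ennreal (g x) * ennreal (K y x)) \<partial>lborel)"
          proof (rule nn_integral_cong)
            fix x show "ennreal (g x) * (ennreal (f y) * ennreal (K x y)) = ennreal (f y) * (ennreal (g x) * ennreal (K y x))"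
              using Ksym[of x y] by (simp add: ac_simps)
          qed
          also have "\<dots> = ennreal (f y) * (\<integral>\<^sup>+x. ennreal (g x) * ennreal (K y x) \<partial>lborel)"
            by (rule nn_integral_cmult) (simp add: K_def)
          finally show "(\<integral>\<^sup>+x. ennreal (g x) * (ennreal (f y) * ennreal (K x y)) \<partial>lborel) = ennreal (f y) * (\<integral>\<^sup>+x. ennreal (g x) * ennreal (K y x) \<partial>lborel)" .
        qed
        finally have "(\<integral>\<^sup>+x. ennreal (g x) * (\<integral>\<^sup>+y. ennreal (f y) * ennreal (K x y) \<partial>lborel) \<partial>lborel)
            = (\<integral>\<^sup>+x. ennreal (f x) * (\<integral>\<^sup>+y. ennreal (g y) * ennreal (K x y) \<partial>lborel) \<partial>lborel)" .
        then have "ennreal (R g f) = ennreal (R f g)"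
          unfolding R_def real_form(1)[OF gi g_nonneg fi f_nonneg Km K01] real_form(1)[OF fi f_nonneg gi g_nonneg Km K01] .
        then show ?thesis using Rnn f_nonneg g_nonneg by simp
      qed
      have Iab: "integrable lborel (\<lambda>x. a x * (\<integral>y. b y * K x y \<partial>lborel))"
        if "integrable lborel a" "\<And>x. a x \<ge> 0" "integrable lborel b" "\<And>x. b x \<ge> 0" for a b
        by (rule real_form(2)[OF that Km K01])
      have ifK: "integrable lborel (\<lambda>y. f y * K x y)" for x
        unfolding K_def by (rule integrable_real_mult_indicator[OF Bx fi])
      have igK: "integrable lborel (\<lambda>y. g y * K x y)" for x
        unfolding K_def by (rule integrable_real_mult_indicator[OF Bx gi])
      have inner: "(\<integral>y. (f y - g y) * K x y \<partial>lborel) = (\<integral>y. f y * K x y \<partial>lborel) - (\<integral>y. g y * K x y \<partial>lborel)" for x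
        using Bochner_Integration.integral_diff[OF ifK igK, of x] by (simp add: algebra_simps)
      have fun_eq: "(\<lambda>x. (f x - g x) * (\<integral>y. (f y - g y) * K x y \<partial>lborel))
          = (\<lambda>x. (f x * (\<integral>y. f y * K x y \<partial>lborel) - f x * (\<integral>y. g y * K x y \<partial>lborel))
               - (g x * (\<integral>y. f y * K x y \<partial>lborel) - g x * (\<integral>y. g y * K x y \<partial>lborel)))"
        unfolding inner by (simp add: fun_eq_iff algebra_simps)
      have "(\<integral>x. (f x - g x) * (\<integral>y. (f y - g y) * K x y \<partial>lborel) \<partial>lborel) = (R f f - R f g) - (R g f - R g g)"
        unfolding fun_eq R_def
        using Iab[OF fi f_nonneg fi f_nonneg] Iab[OF fi f_nonneg gi g_nonneg]
          Iab[OF gi g_nonneg fi f_nonneg] Iab[OF gi g_nonneg gi g_nonneg]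
        by (simp add: Bochner_Integration.integral_diff)
      also have "\<dots> = 0" using Rff_gg Rgg_fg Rgf_fg by simp
      finally have Z: "(\<integral>x. (f x - g x) * (\<integral>y. (f y - g y) * K x y \<partial>lborel) \<partial>lborel) = 0" .
      have tr: "(\<integral>v. (f (x+v) - g (x+v)) * indicator {v. N v < r} v \<partial>lborel) = (\<integral>y. (f y - g y) * K x y \<partial>lborel)" for x
      proof -
        have "(\<integral>y. (f y - g y) * K x y \<partial>lborel) = (\<integral>v. (f (x+v) - g (x+v)) * K x (x+v) \<partial>lborel)"
          by (rule integral_transl) (simp add: K_def)
        also have "\<dots> = (\<integral>v. (f (x+v) - g (x+v)) * indicator {v. N v < r} v \<partial>lborel)"
          by (simp add: K_def indicator_def)
        finally show ?thesis by simp
      qed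
      show ?thesis using Z by (simp add: tr)
    qed
    have osc: "\<exists>r0>0. \<exists>C\<ge>0. AE x in lborel. \<forall>r\<in>{0<..<r0}. (\<integral>\<^sup>+v. ennreal \<bar>\<phi> (x+v) - \<phi> x\<bar> * indicator {v. N v < r} v \<partial>lborel) \<le> ennreal C * emeasure lborel {v. N v < r}"
      if \<phi>osc: "unif_bdd_osc h \<phi>" and \<phi>m[measurable]: "\<phi> \<in> borel_measurable borel" for \<phi>
    proof -
      obtain \<epsilon> C where \<epsilon>: "\<epsilon> > 0" and C: "C > 0" and AEc: "AE x in lborel. centered_osc h \<phi> x \<epsilon> < ennreal C"
        using \<phi>osc unfolding unif_bdd_osc_def by blast
      obtain r1 where r1: "r1 > 0" and r1\<gamma>: "\<And>r. 0 \<le> r \<Longrightarrow> r < r1 \<Longrightarrow> \<gamma> r < \<epsilon>"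
      proof -
        have cc: "\<forall>x\<in>{0..}. \<forall>e>0. \<exists>d>0. \<forall>x'\<in>{0..}. dist x' x < d \<longrightarrow> dist (\<gamma> x') (\<gamma> x) < e"
          using \<gamma>_cont unfolding continuous_on_iff .
        have "(0::real) \<in> {0..}" by simp
        then have "\<exists>d>0. \<forall>x'\<in>{0..}. dist x' 0 < d \<longrightarrow> dist (\<gamma> x') (\<gamma> 0) < \<epsilon>"
          using cc \<epsilon> by blast
        then obtain d where d: "d > 0" "\<forall>x'\<in>{0..}. dist x' 0 < d \<longrightarrow> dist (\<gamma> x') (\<gamma> 0) < \<epsilon>" by blast
        show ?thesis
        proof (rule that[OF d(1)])
          fix r :: real assume r: "0 \<le> r" "r < d"
          have "dist (\<gamma> r) (\<gamma> 0) < \<epsilon>" using d(2) r by (simp add: dist_real_def)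
          then show "\<gamma> r < \<epsilon>" using \<gamma>_0 by (simp add: dist_real_def)
        qed
      qed
      have "AE x in lborel. \<forall>r\<in>{0<..<r1}. (\<integral>\<^sup>+v. ennreal \<bar>\<phi> (x+v) - \<phi> x\<bar> * indicator {v. N v < r} v \<partial>lborel) \<le> ennreal C * emeasure lborel {v. N v < r}"
        using AEc
      proof eventually_elim
        case (elim x)
        show ?case
        proof
          fix r assume r: "r \<in> {0<..<r1}"
          define t where "t = \<gamma> r"
          have t0: "0 < t" using \<gamma>lt[of 0 r] r \<gamma>_0 by (simp add: t_def)
          have t1: "t < \<epsilon>" using r1\<gamma>[of r] r by (simp add: t_def)
          have hb: "hball h x t = {y. N (y - x) < r}" unfolding hball_def t_def using hball_eq[of r x] r by simp
          have Bs: "{y. N (y - x) < r} \<in> sets borel" by measurable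
          have vim: "(+) x -` {y. N (y - x) < r} = {v. N v < r}" by auto
          have PhiB: "Phi h x t = emeasure lborel {v. N v < r}"
            unfolding Phi_def hb emeasure_transl[OF Bs, of x] vim ..
          have IB: "(\<integral>\<^sup>+y. ennreal \<bar>\<phi> y - \<phi> x\<bar> * indicator (hball h x t) y \<partial>lborel) = (\<integral>\<^sup>+v. ennreal \<bar>\<phi> (x+v) - \<phi> x\<bar> * indicator {v. N v < r} v \<partial>lborel)"
            unfolding hb by (subst nn_integral_transl[of _ x]) (simp_all add: indicator_def)
          have pos: "0 < emeasure lborel {v. N v < r}" and fin: "emeasure lborel {v. N v < r} < \<infinity>"
            using B_meas[OF Nc Nh N0 Nnn, of r] r by auto
          have "(\<integral>\<^sup>+y. ennreal \<bar>\<phi> y - \<phi> x\<bar> * indicator (hball h x t) y \<partial>lborel) / Phi h x t \<le> centered_osc h \<phi> x \<epsilon>"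
            unfolding centered_osc_def by (rule SUP_upper) (use t0 t1 in simp)
          then have "(\<integral>\<^sup>+y. ennreal \<bar>\<phi> y - \<phi> x\<bar> * indicator (hball h x t) y \<partial>lborel) / Phi h x t < ennreal C"
            using elim by (rule le_less_trans)
          then have "(\<integral>\<^sup>+y. ennreal \<bar>\<phi> y - \<phi> x\<bar> * indicator (hball h x t) y \<partial>lborel) < ennreal C * Phi h x t"
            using pos fin unfolding PhiB by (subst (asm) divide_less_ennreal) auto
          then show "(\<integral>\<^sup>+v. ennreal \<bar>\<phi> (x+v) - \<phi> x\<bar> * indicator {v. N v < r} v \<partial>lborel) \<le> ennreal C * emeasure lborel {v. N v < r}"
            unfolding IB PhiB by simp
        qed
      qed
      then show ?thesis using r1 C less_imp_le[OF C] by blast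
    qed
    obtain r0f Cf where r0f: "r0f > 0" "Cf \<ge> 0" and oscf: "AE x in lborel. \<forall>r\<in>{0<..<r0f}. (\<integral>\<^sup>+v. ennreal \<bar>f (x+v) - f x\<bar> * indicator {v. N v < r} v \<partial>lborel) \<le> ennreal Cf * emeasure lborel {v. N v < r}"
      using osc[OF f_osc fm] by blast
    obtain r0g Cg where r0g: "r0g > 0" "Cg \<ge> 0" and oscg: "AE x in lborel. \<forall>r\<in>{0<..<r0g}. (\<integral>\<^sup>+v. ennreal \<bar>g (x+v) - g x\<bar> * indicator {v. N v < r} v \<partial>lborel) \<le> ennreal Cg * emeasure lborel {v. N v < r}"
      using osc[OF g_osc gm] by blast
    define r0 where "r0 = min r0f r0g"
    define C where "C = max Cf Cg"
    have oscf': "AE x in lborel. \<forall>r\<in>{0<..<r0}. (\<integral>\<^sup>+v. ennreal \<bar>f (x+v) - f x\<bar> * indicator {v. N v < r} v \<partial>lborel) \<le> ennreal C * emeasure lborel {v. N v < r}"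
      using oscf
    proof eventually_elim
      case (elim x)
      show ?case
      proof
        fix r assume "r \<in> {0<..<r0}"
        then have "r \<in> {0<..<r0f}" by (simp add: r0_def)
        then have "(\<integral>\<^sup>+v. ennreal \<bar>f (x+v) - f x\<bar> * indicator {v. N v < r} v \<partial>lborel) \<le> ennreal Cf * emeasure lborel {v. N v < r}"
          using elim by blast
        also have "\<dots> \<le> ennreal C * emeasure lborel {v. N v < r}"
          by (intro mult_right_mono ennreal_leI) (auto simp: C_def)
        finally show "(\<integral>\<^sup>+v. ennreal \<bar>f (x+v) - f x\<bar> * indicator {v. N v < r} v \<partial>lborel) \<le> ennreal C * emeasure lborel {v. N v < r}" .
      qed
    qed
    have oscg': "AE x in lborel. \<forall>r\<in>{0<..<r0}. (\<integral>\<^sup>+v. ennreal \<bar>g (x+v) - g x\<bar> * indicator {v. N v < r} v \<partial>lborel) \<le> ennreal C * emeasure lborel {v. N v < r}"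
      using oscg
    proof eventually_elim
      case (elim x)
      show ?case
      proof
        fix r assume "r \<in> {0<..<r0}"
        then have "r \<in> {0<..<r0g}" by (simp add: r0_def)
        then have "(\<integral>\<^sup>+v. ennreal \<bar>g (x+v) - g x\<bar> * indicator {v. N v < r} v \<partial>lborel) \<le> ennreal Cg * emeasure lborel {v. N v < r}"
          using elim by blast
        also have "\<dots> \<le> ennreal C * emeasure lborel {v. N v < r}"
          by (intro mult_right_mono ennreal_leI) (auto simp: C_def)
        finally show "(\<integral>\<^sup>+v. ennreal \<bar>g (x+v) - g x\<bar> * indicator {v. N v < r} v \<partial>lborel) \<le> ennreal C * emeasure lborel {v. N v < r}" .
      qed
    qed
    have r0: "r0 > 0" using r0f r0g by (simp add: r0_def)
    have C0: "C \<ge> 0" using r0f r0g by (simp add: C_def)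
    show "AE x in lborel. f x = g x"
      by (rule main_analytic[OF fi gi f_L2 g_L2 Nc Nh N0 Nnn r0 C0 oscf' oscg' Q])
  qed
qed

end
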